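(* Let $\mathcal{L}$ be the generator of a trace preserving quantum dynamical semigroup on $\mathfrak{T}(\mathcal{H})$ which is in generalized standard form with operators $M$ and $L_k$. Then there exists an orthonormal basis $\{e_k\}$ of $\mathcal{H}$ such that $\mathcal{D}_e=\mathrm{span}\{e_k\}$ is a core for $M$ and $\mathcal{D}_e^2=\mathrm{span}\{|e_k\rangle\langle e_\ell|\}$ is a core for $\mathcal{L}$.
   Context: $\mathcal{H}$ is a separable Hilbert space, $\mathfrak{T}(\mathcal{H})$ the trace class operators with trace norm $\|\cdot\|_1$. A trace preserving quantum dynamical semigroup is a strongly continuous semigroup of trace preserving completely positive maps on $\mathfrak{T}(\mathcal{H})$ with generator $\mathcal{L}(\rho)=\lim_{t\to0}\frac1t(\mathcal{T}^t(\rho)-\rho)$. Generalized standard form: there are a closed densely defined operator $M$ generating a semigroup on $\mathcal{H}$ and countably many linear operators $L_k$, each relatively bounded with respect to $M$, such that for all $\phi,\psi\in\mathcal{D}(M)$, $|\phi\rangle\langle\psi|\in\mathcal{D}(\mathcal{L})$ and $\mathcal{L}(|\phi\rangle\langle\psi|)=\sum_k|L_k\phi\rangle\langle L_k\psi|-|M\phi\rangle\langle\psi|-|\phi\rangle\langle M\psi|$; $\mathcal{D}(\mathcal{L})$ is the graph-norm closure ($\|\rho\|_1+\|\mathcal{L}\rho\|_1$) of the set $\mathcal{D}_0$ of finite sums of such $|\phi\rangle\langle\psi|$; and $\sum_k\|L_k\phi\|^2=\langle\phi|M\phi\rangle+\langle M\phi|\phi\rangle$ for all $\phi\in\mathcal{D}(M)$.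 *)

theory Defs
  imports "HOL-Analysis.Analysis"
begin

text \<open>Concrete model of a separable complex Hilbert space: H = l2(I) for a countable
  index type I. Vectors are functions I -> complex; operators are maps on such functions.\<close>

type_synonym 'i vec = "'i \<Rightarrow> complex"
type_synonym 'i op = "'i vec \<Rightarrow> 'i vec"

definition l2 :: "('i::countable) vec set" where
  "l2 = {x. (\<lambda>i. (cmod (x i))\<^sup>2) summable_on UNIV}"

definition inner_l2 :: "('i::countable) vec \<Rightarrow> 'i vec \<Rightarrow> complex" where
  "inner_l2 x y = (\<Sum>\<^sub>\<infinity>i. cnj (x i) * y i)"

definition vnorm :: "('i::countable) vec \<Rightarrow> real" where
  "vnorm x = sqrt (\<Sum>\<^sub>\<infinity>i. (cmod (x i))\<^sup>2)"

definition vadd :: "'i vec \<Rightarrow> 'i vec \<Rightarrow> 'i vec" where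
  "vadd x y = (\<lambda>i. x i + y i)"

definition vsub :: "'i vec \<Rightarrow> 'i vec \<Rightarrow> 'i vec" where
  "vsub x y = (\<lambda>i. x i - y i)"

definition smult :: "complex \<Rightarrow> 'i vec \<Rightarrow> 'i vec" where
  "smult c x = (\<lambda>i. c * x i)"

definition vzero :: "'i vec" where
  "vzero = (\<lambda>i. 0)"

definition subspace_l2 :: "('i::countable) vec set \<Rightarrow> bool" where
  "subspace_l2 D \<longleftrightarrow> D \<subseteq> l2 \<and> vzero \<in> D \<and>
     (\<forall>x\<in>D. \<forall>y\<in>D. \<forall>c. vadd x (smult c y) \<in> D)"

definition linear_on :: "'i vec set \<Rightarrow> 'i op \<Rightarrow> bool" where
  "linear_on D f \<longleftrightarrow> (\<forall>x\<in>D. \<forall>y\<in>D. \<forall>c. f (vadd x (smult c y)) = vadd (f x) (smult c (f y)))"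

text \<open>Operators on trace class elements: difference, scaling, finite sums.
  Trace-class operators are normalised to vanish outside l2, so that they are
  genuinely determined by their action on H.\<close>

definition opsub :: "'i op \<Rightarrow> 'i op \<Rightarrow> 'i op" where
  "opsub A B = (\<lambda>x. vsub (A x) (B x))"

definition opadd :: "'i op \<Rightarrow> 'i op \<Rightarrow> 'i op" where
  "opadd A B = (\<lambda>x. vadd (A x) (B x))"

definition opscale :: "complex \<Rightarrow> 'i op \<Rightarrow> 'i op" where
  "opscale c A = (\<lambda>x. smult c (A x))"

definition opzero :: "'i op" where
  "opzero = (\<lambda>x. vzero)"

definition opsum :: "nat \<Rightarrow> (nat \<Rightarrow> 'i op) \<Rightarrow> 'i op" where
  "opsum n A = (\<lambda>x. (\<lambda>i. \<Sum>k<n. A k x i))"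

definition ketbra :: "('i::countable) vec \<Rightarrow> 'i vec \<Rightarrow> 'i op" where
  "ketbra \<phi> \<psi> = (\<lambda>x. if x \<in> l2 then smult (inner_l2 \<psi> x) \<phi> else vzero)"

definition orthonormal_fam :: "nat \<Rightarrow> (nat \<Rightarrow> ('i::countable) vec) \<Rightarrow> bool" where
  "orthonormal_fam N \<phi> \<longleftrightarrow> (\<forall>n<N. \<phi> n \<in> l2) \<and>
     (\<forall>n<N. \<forall>m<N. inner_l2 (\<phi> n) (\<phi> m) = (if n = m then 1 else 0))"

definition tnorm :: "('i::countable) op \<Rightarrow> ennreal" where
  "tnorm A = (SUP N. SUP p \<in> {(\<phi>, \<psi>). orthonormal_fam N \<phi> \<and> orthonormal_fam N \<psi>}.
       ennreal (\<Sum>n<N. cmod (inner_l2 (fst p n) (A (snd p n)))))"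

definition trace_class :: "('i::countable) op \<Rightarrow> bool" where
  "trace_class A \<longleftrightarrow> (\<forall>x. x \<notin> l2 \<longrightarrow> A x = vzero) \<and> A ` l2 \<subseteq> l2 \<and>
     linear_on l2 A \<and> tnorm A < \<infinity>"

definition trace :: "('i::countable) op \<Rightarrow> complex" where
  "trace A = (\<Sum>\<^sub>\<infinity>i. A (\<lambda>j. if j = i then 1 else 0) i)"

text \<open>Complete positivity: id_n (x) Phi is positive on T(C^n (x) H) = M_n(T(H)) for all n.\<close>

definition block_pos :: "nat \<Rightarrow> (nat \<Rightarrow> nat \<Rightarrow> ('i::countable) op) \<Rightarrow> bool" where
  "block_pos n \<rho> \<longleftrightarrow> (\<forall>x. (\<forall>i<n. x i \<in> l2) \<longrightarrow>
      (let s = (\<Sum>i<n. \<Sum>j<n. inner_l2 (x i) (\<rho> i j (x j))) in Im s = 0 \<and> 0 \<le> Re s))"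

definition completely_positive :: "(('i::countable) op \<Rightarrow> 'i op) \<Rightarrow> bool" where
  "completely_positive \<Phi> \<longleftrightarrow> (\<forall>n \<rho>. (\<forall>i<n. \<forall>j<n. trace_class (\<rho> i j)) \<longrightarrow>
      block_pos n \<rho> \<longrightarrow> block_pos n (\<lambda>i j. \<Phi> (\<rho> i j)))"

definition tp_qds :: "(real \<Rightarrow> ('i::countable) op \<Rightarrow> 'i op) \<Rightarrow> bool" where
  "tp_qds T \<longleftrightarrow>
     (\<forall>t\<ge>0. \<forall>\<rho>. trace_class \<rho> \<longrightarrow> trace_class (T t \<rho>)) \<and>
     (\<forall>t\<ge>0. \<forall>\<rho> \<sigma> c. trace_class \<rho> \<longrightarrow> trace_class \<sigma> \<longrightarrow>
        T t (opadd \<rho> (opscale c \<sigma>)) = opadd (T t \<rho>) (opscale c (T t \<sigma>))) \<and>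
     (\<forall>t\<ge>0. \<exists>C::real. \<forall>\<rho>. trace_class \<rho> \<longrightarrow> tnorm (T t \<rho>) \<le> ennreal C * tnorm \<rho>) \<and>
     (\<forall>t\<ge>0. completely_positive (T t)) \<and>
     (\<forall>t\<ge>0. \<forall>\<rho>. trace_class \<rho> \<longrightarrow> trace (T t \<rho>) = trace \<rho>) \<and>
     (\<forall>\<rho>. trace_class \<rho> \<longrightarrow> T 0 \<rho> = \<rho>) \<and>
     (\<forall>s\<ge>0. \<forall>t\<ge>0. \<forall>\<rho>. trace_class \<rho> \<longrightarrow> T (s + t) \<rho> = T s (T t \<rho>)) \<and>
     (\<forall>\<rho>. trace_class \<rho> \<longrightarrow> ((\<lambda>t. tnorm (opsub (T t \<rho>) \<rho>)) \<longlongrightarrow> 0) (at_right 0))"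

text \<open>The generator, as a relation: gen T rho sigma means rho in D(L) and L rho = sigma.\<close>

definition gen :: "(real \<Rightarrow> ('i::countable) op \<Rightarrow> 'i op) \<Rightarrow> 'i op \<Rightarrow> 'i op \<Rightarrow> bool" where
  "gen T \<rho> \<sigma> \<longleftrightarrow> trace_class \<rho> \<and> trace_class \<sigma> \<and>
     ((\<lambda>t. tnorm (opsub (opscale (complex_of_real (1 / t)) (opsub (T t \<rho>) \<rho>)) \<sigma>)) \<longlongrightarrow> 0) (at_right 0)"

definition gen_dom :: "(real \<Rightarrow> ('i::countable) op \<Rightarrow> 'i op) \<Rightarrow> 'i op set" where
  "gen_dom T = {\<rho>. \<exists>\<sigma>. gen T \<rho> \<sigma>}"

definition graph_closure :: "(real \<Rightarrow> ('i::countable) op \<Rightarrow> 'i op) \<Rightarrow> 'i op set \<Rightarrow> 'i op set" where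
  "graph_closure T D = {\<rho>. \<exists>\<sigma>. gen T \<rho> \<sigma> \<and> (\<exists>r s. (\<forall>n. r n \<in> D \<and> gen T (r n) (s n)) \<and>
       (\<lambda>n. tnorm (opsub (r n) \<rho>)) \<longlonglongrightarrow> 0 \<and> (\<lambda>n. tnorm (opsub (s n) \<sigma>)) \<longlonglongrightarrow> 0)}"

definition is_core_gen :: "(real \<Rightarrow> ('i::countable) op \<Rightarrow> 'i op) \<Rightarrow> 'i op set \<Rightarrow> bool" where
  "is_core_gen T D \<longleftrightarrow> D \<subseteq> gen_dom T \<and> graph_closure T D = gen_dom T"

definition D0 :: "('i::countable) vec set \<Rightarrow> 'i op set" where
  "D0 DM = {opsum n (\<lambda>k. ketbra (a k) (b k)) | (n::nat) a b. \<forall>k<n. a k \<in> DM \<and> b k \<in> DM}"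

definition closed_op :: "('i::countable) vec set \<Rightarrow> 'i op \<Rightarrow> bool" where
  "closed_op DM M \<longleftrightarrow> (\<forall>y x z. (\<forall>n. y n \<in> DM) \<longrightarrow> x \<in> l2 \<longrightarrow> z \<in> l2 \<longrightarrow>
      (\<lambda>n. vnorm (vsub (y n) x)) \<longlonglongrightarrow> 0 \<longrightarrow> (\<lambda>n. vnorm (vsub (M (y n)) z)) \<longlonglongrightarrow> 0 \<longrightarrow>
      x \<in> DM \<and> M x = z)"

definition densely_defined :: "('i::countable) vec set \<Rightarrow> bool" where
  "densely_defined DM \<longleftrightarrow> (\<forall>x\<in>l2. \<forall>e>0. \<exists>y\<in>DM. vnorm (vsub x y) < e)"

definition c0_semigroup_l2 :: "(real \<Rightarrow> ('i::countable) op) \<Rightarrow> bool" where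
  "c0_semigroup_l2 S \<longleftrightarrow>
     (\<forall>t\<ge>0. S t ` l2 \<subseteq> l2) \<and> (\<forall>t\<ge>0. linear_on l2 (S t)) \<and>
     (\<forall>t\<ge>0. \<exists>C. \<forall>x\<in>l2. vnorm (S t x) \<le> C * vnorm x) \<and>
     (\<forall>x\<in>l2. S 0 x = x) \<and>
     (\<forall>s\<ge>0. \<forall>t\<ge>0. \<forall>x\<in>l2. S (s + t) x = S s (S t x)) \<and>
     (\<forall>x\<in>l2. ((\<lambda>t. vnorm (vsub (S t x) x)) \<longlongrightarrow> 0) (at_right 0))"

definition is_generator_l2 :: "(real \<Rightarrow> ('i::countable) op) \<Rightarrow> 'i vec set \<Rightarrow> 'i op \<Rightarrow> bool" where
  "is_generator_l2 S DA A \<longleftrightarrow> c0_semigroup_l2 S \<and> DA \<subseteq> l2 \<and>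
     (\<forall>x\<in>l2. x \<in> DA \<longleftrightarrow> (\<exists>z\<in>l2.
        ((\<lambda>t. vnorm (vsub (smult (complex_of_real (1 / t)) (vsub (S t x) x)) z)) \<longlongrightarrow> 0) (at_right 0))) \<and>
     (\<forall>x\<in>DA. A x \<in> l2 \<and>
        ((\<lambda>t. vnorm (vsub (smult (complex_of_real (1 / t)) (vsub (S t x) x)) (A x))) \<longlongrightarrow> 0) (at_right 0))"

definition rel_bounded :: "('i::countable) vec set \<Rightarrow> 'i op \<Rightarrow> 'i op \<Rightarrow> bool" where
  "rel_bounded DM M B \<longleftrightarrow> (\<forall>\<phi>\<in>DM. B \<phi> \<in> l2) \<and> linear_on DM B \<and>
     (\<exists>a b. \<forall>\<phi>\<in>DM. vnorm (B \<phi>) \<le> a * vnorm (M \<phi>) + b * vnorm \<phi>)"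

text \<open>Generalized standard form of the generator of T with operators (DM, M) and L_k, k in nat.
  "M generates a semigroup" is read as: -M is the generator of a C0-semigroup on H
  (the semigroup e^{-tM}).\<close>

definition gen_standard_form ::
  "(real \<Rightarrow> ('i::countable) op \<Rightarrow> 'i op) \<Rightarrow> 'i vec set \<Rightarrow> 'i op \<Rightarrow> (nat \<Rightarrow> 'i op) \<Rightarrow> bool" where
  "gen_standard_form T DM M L \<longleftrightarrow>
     subspace_l2 DM \<and> (\<forall>\<phi>\<in>DM. M \<phi> \<in> l2) \<and> linear_on DM M \<and>
     closed_op DM M \<and> densely_defined DM \<and>
     (\<exists>S. is_generator_l2 S DM (\<lambda>x. smult (-1) (M x))) \<and>
     (\<forall>k. rel_bounded DM M (L k)) \<and>
     (\<forall>\<phi>\<in>DM. \<forall>\<psi>\<in>DM. \<exists>\<sigma>. gen T (ketbra \<phi> \<psi>) \<sigma> \<and>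
        (\<lambda>n. tnorm (opsub (opsub (opsub (opsum n (\<lambda>k. ketbra (L k \<phi>) (L k \<psi>)))
                 (ketbra (M \<phi>) \<psi>)) (ketbra \<phi> (M \<psi>))) \<sigma>)) \<longlonglongrightarrow> 0) \<and>
     gen_dom T = graph_closure T (D0 DM) \<and>
     (\<forall>\<phi>\<in>DM. (\<lambda>k. complex_of_real ((vnorm (L k \<phi>))\<^sup>2)) sums
        (inner_l2 \<phi> (M \<phi>) + inner_l2 (M \<phi>) \<phi>))"

definition orthonormal_basis :: "('i::countable) vec set \<Rightarrow> bool" where
  "orthonormal_basis E \<longleftrightarrow> E \<subseteq> l2 \<and>
     (\<forall>e\<in>E. \<forall>e'\<in>E. inner_l2 e e' = (if e = e' then 1 else 0)) \<and>
     (\<forall>x\<in>l2. (\<forall>e\<in>E. inner_l2 e x = 0) \<longrightarrow> x = vzero)"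

definition lspan :: "'i vec set \<Rightarrow> 'i vec set" where
  "lspan E = {(\<lambda>i. \<Sum>k<n. c k * e k i) | (n::nat) c e. \<forall>k<n. e k \<in> E}"

definition lspan2 :: "('i::countable) vec set \<Rightarrow> 'i op set" where
  "lspan2 E = {opsum n (\<lambda>k. opscale (c k) (ketbra (a k) (b k))) | (n::nat) c a b.
                 \<forall>k<n. a k \<in> E \<and> b k \<in> E}"

definition is_core_op :: "('i::countable) vec set \<Rightarrow> 'i op \<Rightarrow> 'i vec set \<Rightarrow> bool" where
  "is_core_op DM M D \<longleftrightarrow> D \<subseteq> DM \<and>
     (\<forall>x\<in>DM. \<exists>y. (\<forall>n. y n \<in> D) \<and> (\<lambda>n. vnorm (vsub (y n) x)) \<longlonglongrightarrow> 0 \<and>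
                   (\<lambda>n. vnorm (vsub (M (y n)) (M x))) \<longlonglongrightarrow> 0)"

end

theory Submission
  imports Defs
begin


lemma sq_triangle_bound: "(cmod (a+b))^2 \<le> 2*(cmod a)^2 + 2*(cmod b)^2"
proof -
  have "cmod (a+b) \<le> cmod a + cmod b" by (rule norm_triangle_ineq)
  hence "(cmod (a+b))^2 \<le> (cmod a + cmod b)^2" by (simp add: power_mono)
  also have "\<dots> \<le> 2*(cmod a)^2 + 2*(cmod b)^2"
    using zero_le_power2[of "cmod a - cmod b"] by (simp add: power2_sum power2_diff)
  finally show ?thesis .
qed

lemma l2_vzero[simp]: "vzero \<in> l2" by (simp add: l2_def vzero_def)

lemma l2_smult[simp]: "x \<in> l2 \<Longrightarrow> smult c x \<in> l2"
  unfolding l2_def smult_def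
  by (simp add: norm_mult power_mult_distrib summable_on_cmult_right)

lemma l2_vadd[simp]: assumes "x\<in>l2" "y\<in>l2" shows "vadd x y \<in> l2"
proof -
  have "(\<lambda>i. 2*(cmod (x i))^2 + 2*(cmod (y i))^2) summable_on UNIV"
    using assms by (auto simp: l2_def intro!: summable_on_add summable_on_cmult_right)
  then show ?thesis unfolding l2_def vadd_def mem_Collect_eq
    by (rule summable_on_comparison_test) (auto simp: sq_triangle_bound)
qed

lemma vsub_eq: "vsub x y = vadd x (smult (-1) y)"
  by (simp add: vsub_def vadd_def smult_def fun_eq_iff)

lemma l2_vsub[simp]: "x\<in>l2 \<Longrightarrow> y\<in>l2 \<Longrightarrow> vsub x y \<in> l2"
  by (simp add: vsub_eq)

lemma inner_summable: assumes "x\<in>l2" "y\<in>l2"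
  shows "(\<lambda>i. cnj (x i) * y i) summable_on UNIV"
proof -
  have "(\<lambda>i. (cmod (x i))^2 + (cmod (y i))^2) summable_on UNIV"
    using assms unfolding l2_def mem_Collect_eq by (rule summable_on_add)
  from summable_on_cmult_right[OF this, of "1/2"]
  have "(\<lambda>i. (1/2) * ((cmod (x i))^2 + (cmod (y i))^2)) summable_on UNIV" .
  hence "(\<lambda>i. norm (cnj (x i) * y i)) summable_on UNIV"
  proof (rule summable_on_comparison_test)
    fix i
    have "cmod (x i) * cmod (y i) \<le> (1/2) * ((cmod (x i))^2 + (cmod (y i))^2)"
      using sum_squares_bound[of "cmod (x i)" "cmod (y i)"] by simp
    thus "norm (cnj (x i) * y i) \<le> (1/2) * ((cmod (x i))^2 + (cmod (y i))^2)"
      by (simp add: norm_mult)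
  qed auto
  thus ?thesis by (rule abs_summable_summable)
qed

lemma lincomb_l2: fixes e :: "nat \<Rightarrow> ('i::countable) vec" shows "(\<And>k. k<n \<Longrightarrow> e k \<in> l2) \<Longrightarrow> (\<lambda>i. \<Sum>k<n. c k * e k i) \<in> l2"
proof (induction n)
  case 0 thus ?case by (simp add: vzero_def[symmetric])
next
  case (Suc n)
  have "(\<lambda>i. \<Sum>k<Suc n. c k * e k i) = vadd (\<lambda>i. \<Sum>k<n. c k * e k i) (smult (c n) (e n))"
    by (simp add: vadd_def smult_def fun_eq_iff)
  thus ?case using Suc by simp
qed

lemma inner_add_right: "x\<in>l2 \<Longrightarrow> y\<in>l2 \<Longrightarrow> z\<in>l2 \<Longrightarrow> inner_l2 x (vadd y z) = inner_l2 x y + inner_l2 x z"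
  unfolding inner_l2_def vadd_def
  by (simp add: distrib_left infsum_add inner_summable)

lemma inner_smult_right: "inner_l2 x (smult c y) = c * inner_l2 x y"
  unfolding inner_l2_def smult_def
  by (simp add: infsum_cmult_right'[symmetric] mult.left_commute)

lemma inner_cnj: "inner_l2 y x = cnj (inner_l2 x y)"
proof -
  have "cnj (\<Sum>\<^sub>\<infinity>i. cnj (x i) * y i) = (\<Sum>\<^sub>\<infinity>i. cnj (cnj (x i) * y i))" by (rule infsum_cnj[symmetric])
  thus ?thesis unfolding inner_l2_def by (simp add: mult.commute)
qed

lemma inner_add_left: "x\<in>l2 \<Longrightarrow> y\<in>l2 \<Longrightarrow> z\<in>l2 \<Longrightarrow> inner_l2 (vadd y z) x = inner_l2 y x + inner_l2 z x"
  by (metis complex_cnj_add inner_add_right inner_cnj)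

lemma inner_smult_left: "inner_l2 (smult c y) x = cnj c * inner_l2 y x"
  by (metis complex_cnj_mult inner_cnj inner_smult_right)

lemma inner_sub_right: "x\<in>l2 \<Longrightarrow> y\<in>l2 \<Longrightarrow> z\<in>l2 \<Longrightarrow> inner_l2 x (vsub y z) = inner_l2 x y - inner_l2 x z"
  by (simp add: vsub_eq inner_add_right inner_smult_right)

lemma inner_sub_left: "x\<in>l2 \<Longrightarrow> y\<in>l2 \<Longrightarrow> z\<in>l2 \<Longrightarrow> inner_l2 (vsub y z) x = inner_l2 y x - inner_l2 z x"
  by (simp add: vsub_eq inner_add_left inner_smult_left)

lemma inner_vzero_left[simp]: "inner_l2 vzero x = 0" by (simp add: inner_l2_def vzero_def)
lemma inner_vzero_right[simp]: "inner_l2 x vzero = 0" by (simp add: inner_l2_def vzero_def)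

lemma inner_self: assumes "x \<in> l2" shows "inner_l2 x x = complex_of_real ((vnorm x)^2)"
proof -
  have s: "(\<lambda>i. (cmod (x i))^2) summable_on UNIV" using assms by (simp add: l2_def)
  have nn: "0 \<le> (\<Sum>\<^sub>\<infinity>i. (cmod (x i))^2)" by (simp add: infsum_nonneg)
  have "inner_l2 x x = (\<Sum>\<^sub>\<infinity>i. complex_of_real ((cmod (x i))^2))"
    unfolding inner_l2_def by (rule infsum_cong) (simp add: complex_norm_square mult.commute del: of_real_power)
  also have "\<dots> = complex_of_real (\<Sum>\<^sub>\<infinity>i. (cmod (x i))^2)"
    using has_sum_of_real[OF s[unfolded summable_iff_has_sum_infsum]] by (rule infsumI)
  finally show ?thesis using nn by (simp add: vnorm_def)
qed


lemma vnorm_sq: "(vnorm x)^2 = (\<Sum>\<^sub>\<infinity>i. (cmod (x i))^2)"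
proof -
  have "0 \<le> (\<Sum>\<^sub>\<infinity>i. (cmod (x i))^2)" using infsum_nonneg[of UNIV "\<lambda>i. (cmod (x i))^2"] by simp
  thus ?thesis by (simp add: vnorm_def)
qed

lemma vnorm_nonneg[simp]: "0 \<le> vnorm x"
  using infsum_nonneg[of UNIV "\<lambda>i. (cmod (x i))^2"] by (simp add: vnorm_def)

lemma vnorm_zero: assumes "x \<in> l2" "vnorm x = 0" shows "x = vzero"
proof
  fix i
  have s: "(\<lambda>i. (cmod (x i))^2) summable_on UNIV" using assms by (simp add: l2_def)
  have "(\<Sum>\<^sub>\<infinity>i. (cmod (x i))^2) \<le> 0" using assms vnorm_sq[of x] by simp
  hence "(cmod (x i))^2 = 0" by (rule nonneg_infsum_le_0D[OF _ s]) simp_all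
  thus "x i = vzero i" by (simp add: vzero_def)
qed

lemma vnorm_vzero[simp]: "vnorm vzero = 0" by (simp add: vnorm_def vzero_def)

lemma vnorm_smult: "vnorm (smult c x) = cmod c * vnorm x"
proof -
  have "(\<Sum>\<^sub>\<infinity>i. (cmod (smult c x i))^2) = (cmod c)^2 * (\<Sum>\<^sub>\<infinity>i. (cmod (x i))^2)"
    unfolding smult_def
    by (simp add: norm_mult power_mult_distrib infsum_cmult_right')
  thus ?thesis by (simp add: vnorm_def real_sqrt_mult)
qed



lemma amgm: fixes a b t :: real assumes "t>0" shows "a*b \<le> (t*a^2 + b^2/t)/2"
proof -
  have "0 \<le> (t*a - b)^2" by simp
  hence "2*t*(a*b) \<le> t^2*a^2 + b^2" by (simp add: power2_diff power_mult_distrib algebra_simps)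
  hence "2*t*(a*b) \<le> t*(t*a^2 + b^2/t)" using assms by (simp add: algebra_simps power2_eq_square)
  hence "2*(a*b) \<le> t*a^2 + b^2/t" using assms by (simp add: mult.assoc)
  thus ?thesis by simp
qed

lemma inner_cs: assumes x: "x\<in>l2" and y: "y\<in>l2" shows "cmod (inner_l2 x y) \<le> vnorm x * vnorm y"
proof (cases "vnorm x = 0 \<or> vnorm y = 0")
  case True
  hence "x = vzero \<or> y = vzero" using vnorm_zero x y by blast
  thus ?thesis by auto
next
  case False
  hence nx: "vnorm x \<noteq> 0" and ny: "vnorm y \<noteq> 0" by auto
  have px: "vnorm x > 0" using vnorm_nonneg[of x] nx by linarith
  have py: "vnorm y > 0" using vnorm_nonneg[of y] ny by linarith
  define t where "t = vnorm y / vnorm x"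
  have t: "t > 0" using px py by (simp add: t_def)
  have sx: "(\<lambda>i. (cmod (x i))^2) summable_on UNIV" using x by (simp add: l2_def)
  have sy: "(\<lambda>i. (cmod (y i))^2) summable_on UNIV" using y by (simp add: l2_def)
  have as: "Infinite_Sum.abs_summable_on (\<lambda>i. cnj (x i) * y i) UNIV"
    using summable_on_iff_abs_summable_on_complex[THEN iffD1, OF inner_summable[OF x y]] by simp
  have sx': "(\<lambda>i. t*(cmod (x i))^2) summable_on UNIV" by (rule summable_on_cmult_right[OF sx])
  have sy': "(\<lambda>i. (1/t)*(cmod (y i))^2) summable_on UNIV" by (rule summable_on_cmult_right[OF sy])
  have s2: "(\<lambda>i. (1/2)*(t*(cmod (x i))^2 + (1/t)*(cmod (y i))^2)) summable_on UNIV"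
    by (rule summable_on_cmult_right[OF summable_on_add[OF sx' sy']])
  have "cmod (inner_l2 x y) \<le> (\<Sum>\<^sub>\<infinity>i. norm (cnj (x i) * y i))"
    unfolding inner_l2_def by (rule norm_infsum_bound[OF as])
  also have "\<dots> \<le> (\<Sum>\<^sub>\<infinity>i. (1/2)*(t*(cmod (x i))^2 + (1/t)*(cmod (y i))^2))"
  proof (rule infsum_mono[OF _ s2])
    show "(\<lambda>i. norm (cnj (x i) * y i)) summable_on UNIV" using as by simp
    fix i
    show "norm (cnj (x i) * y i) \<le> (1/2)*(t*(cmod (x i))^2 + (1/t)*(cmod (y i))^2)"
      using amgm[OF t, of "cmod (x i)" "cmod (y i)"] by (simp add: norm_mult)
  qed
  also have "\<dots> = (1/2)*(t*(vnorm x)^2 + (1/t)*(vnorm y)^2)"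
    using sx' sy' by (simp only: infsum_cmult_right' infsum_add vnorm_sq)
  also have "\<dots> = vnorm x * vnorm y" using px py by (simp add: t_def power2_eq_square)
  finally show ?thesis .
qed

lemma vnorm_triangle: assumes x: "x\<in>l2" and y: "y\<in>l2" shows "vnorm (vadd x y) \<le> vnorm x + vnorm y"
proof -
  have "inner_l2 (vadd x y) (vadd x y) = inner_l2 x x + inner_l2 y y + (inner_l2 x y + inner_l2 y x)"
    using x y by (simp add: inner_add_left inner_add_right)
  hence "complex_of_real ((vnorm (vadd x y))^2) = complex_of_real ((vnorm x)^2) + complex_of_real ((vnorm y)^2) + (inner_l2 x y + inner_l2 y x)"
    using x y by (simp only: inner_self l2_vadd)
  from arg_cong[where f=Re, OF this]
  have "(vnorm (vadd x y))^2 = (vnorm x)^2 + (vnorm y)^2 + Re (inner_l2 x y + inner_l2 y x)"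
    by simp
  also have "Re (inner_l2 x y + inner_l2 y x) = 2 * Re (inner_l2 x y)"
    by (subst inner_cnj[of y x]) simp
  also have "\<dots> \<le> 2 * (vnorm x * vnorm y)"
    using complex_Re_le_cmod[of "inner_l2 x y"] inner_cs[OF x y] by simp
  finally have "(vnorm (vadd x y))^2 \<le> (vnorm x + vnorm y)^2" by (simp add: power2_sum)
  thus ?thesis by (rule power2_le_imp_le) simp
qed

lemma vnorm_sub_sym: "vnorm (vsub x y) = vnorm (vsub y x)"
proof -
  have "vsub y x = smult (-1) (vsub x y)" by (simp add: vsub_def smult_def fun_eq_iff)
  thus ?thesis by (simp add: vnorm_smult)
qed

lemma vnorm_sub_triangle: assumes "x\<in>l2" "y\<in>l2" "z\<in>l2"
  shows "vnorm (vsub x z) \<le> vnorm (vsub x y) + vnorm (vsub y z)"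
proof -
  have "vsub x z = vadd (vsub x y) (vsub y z)" by (simp add: vsub_def vadd_def fun_eq_iff)
  thus ?thesis using vnorm_triangle[of "vsub x y" "vsub y z"] assms by simp
qed

lemma vnorm_sub_le: assumes "x\<in>l2" "y\<in>l2" shows "vnorm (vsub x y) \<le> vnorm x + vnorm y"
  using vnorm_triangle[of x "smult (-1) y"] assms by (simp add: vsub_eq vnorm_smult)

lemma vsub_vzero[simp]: "vsub x vzero = x" by (simp add: vsub_def vzero_def)

lemma vnorm_diff_le: assumes "x\<in>l2" "y\<in>l2" shows "\<bar>vnorm x - vnorm y\<bar> \<le> vnorm (vsub x y)"
proof -
  have "vnorm x \<le> vnorm (vsub x y) + vnorm y"
    using vnorm_sub_triangle[of x y vzero] assms by simp
  moreover have "vnorm y \<le> vnorm (vsub x y) + vnorm x"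
    using vnorm_sub_triangle[of y x vzero] assms vnorm_sub_sym[of x y] by simp
  ultimately show ?thesis by linarith
qed

definition lc :: "nat \<Rightarrow> (nat \<Rightarrow> complex) \<Rightarrow> (nat \<Rightarrow> 'i vec) \<Rightarrow> 'i vec" where
  "lc n c e = (\<lambda>i. \<Sum>k<n. c k * e k i)"

lemma lc_Suc: "lc (Suc n) c e = vadd (lc n c e) (smult (c n) (e n))"
  by (simp add: lc_def vadd_def smult_def fun_eq_iff)

lemma lc_0[simp]: "lc 0 c e = vzero" by (simp add: lc_def vzero_def)

lemma lc_l2: "(\<And>k. k<n \<Longrightarrow> e k \<in> l2) \<Longrightarrow> lc n c (e::nat \<Rightarrow> ('i::countable) vec) \<in> l2"
  unfolding lc_def by (rule lincomb_l2)

lemma inner_lc_right: fixes e :: "nat \<Rightarrow> ('i::countable) vec"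
  assumes "\<And>k. k<n \<Longrightarrow> e k \<in> l2" "x \<in> l2"
  shows "inner_l2 x (lc n c e) = (\<Sum>k<n. c k * inner_l2 x (e k))"
  using assms
proof (induction n)
  case (Suc n)
  thus ?case by (simp add: lc_Suc inner_add_right lc_l2 inner_smult_right)
qed simp

lemma inner_lc_left: fixes e :: "nat \<Rightarrow> ('i::countable) vec"
  assumes "\<And>k. k<n \<Longrightarrow> e k \<in> l2" "x \<in> l2"
  shows "inner_l2 (lc n c e) x = (\<Sum>k<n. cnj (c k) * inner_l2 (e k) x)"
proof -
  have "inner_l2 (lc n c e) x = cnj (inner_l2 x (lc n c e))" by (rule inner_cnj)
  also have "\<dots> = cnj (\<Sum>k<n. c k * inner_l2 x (e k))" using assms by (simp add: inner_lc_right)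
  also have "\<dots> = (\<Sum>k<n. cnj (c k) * cnj (inner_l2 x (e k)))" by simp
  also have "\<dots> = (\<Sum>k<n. cnj (c k) * inner_l2 (e k) x)"
    by (intro sum.cong refl) (metis inner_cnj)
  finally show ?thesis .
qed

lemma bessel: fixes \<phi> :: "nat \<Rightarrow> ('i::countable) vec"
  assumes on: "orthonormal_fam N \<phi>" and a: "a \<in> l2"
  shows "(\<Sum>n<N. (cmod (inner_l2 (\<phi> n) a))^2) \<le> (vnorm a)^2"
proof -
  define c where "c n = inner_l2 (\<phi> n) a" for n
  define L where "L = lc N c \<phi>"
  have phi: "\<And>k. k<N \<Longrightarrow> \<phi> k \<in> l2" using on by (simp add: orthonormal_fam_def)
  have L: "L \<in> l2" unfolding L_def using phi by (rule lc_l2)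
  have S: "(\<Sum>k<N. c k * cnj (c k)) = complex_of_real (\<Sum>n<N. (cmod (c n))^2)"
    by (simp add: complex_norm_square del: of_real_power)
  have aL: "inner_l2 a L = (\<Sum>k<N. c k * cnj (c k))"
  proof -
    have "inner_l2 a L = (\<Sum>k<N. c k * inner_l2 a (\<phi> k))"
      unfolding L_def using phi a by (simp add: inner_lc_right)
    also have "\<dots> = (\<Sum>k<N. c k * cnj (c k))" unfolding c_def
      by (intro sum.cong refl) (metis inner_cnj)
    finally show ?thesis .
  qed
  have La: "inner_l2 L a = (\<Sum>k<N. c k * cnj (c k))"
    unfolding L_def using phi a by (simp add: inner_lc_left c_def mult.commute)
  have LL: "inner_l2 L L = (\<Sum>k<N. c k * cnj (c k))"
  proof -
    have "inner_l2 L L = (\<Sum>k<N. cnj (c k) * inner_l2 (\<phi> k) L)"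
      unfolding L_def using phi L[unfolded L_def] by (simp add: inner_lc_left)
    also have "\<dots> = (\<Sum>k<N. cnj (c k) * c k)"
    proof (rule sum.cong)
      fix k assume k: "k \<in> {..<N}"
      have "inner_l2 (\<phi> k) L = (\<Sum>j<N. c j * (if k = j then 1 else 0))"
        unfolding L_def using phi k on by (simp add: inner_lc_right orthonormal_fam_def)
      also have "\<dots> = c k" using k by (simp add: if_distrib cong: if_cong)
      finally show "cnj (c k) * inner_l2 (\<phi> k) L = cnj (c k) * c k" by simp
    qed simp
    finally show ?thesis by (simp add: mult.commute)
  qed
  have "inner_l2 (vsub a L) (vsub a L) = inner_l2 a a - (\<Sum>k<N. c k * cnj (c k))"
    using a L by (simp add: inner_sub_left inner_sub_right aL La LL)
  hence "complex_of_real ((vnorm (vsub a L))^2) = complex_of_real ((vnorm a)^2 - (\<Sum>n<N. (cmod (c n))^2))"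
    using a L by (simp add: inner_self S)
  hence "(vnorm (vsub a L))^2 = (vnorm a)^2 - (\<Sum>n<N. (cmod (c n))^2)" using of_real_eq_iff by blast
  moreover have "0 \<le> (vnorm (vsub a L))^2" by simp
  ultimately show ?thesis by (simp add: c_def)
qed



lemma sum_cs: fixes p q :: "nat \<Rightarrow> real"
  shows "(\<Sum>k\<in>I. p k * q k) \<le> sqrt (\<Sum>k\<in>I. (p k)^2) * sqrt (\<Sum>k\<in>I. (q k)^2)"
proof -
  have "(\<Sum>k\<in>I. p k * q k) \<le> \<bar>\<Sum>k\<in>I. p k * q k\<bar>" by simp
  also have "\<dots> = sqrt ((\<Sum>k\<in>I. p k * q k)^2)" by simp
  also have "\<dots> \<le> sqrt ((\<Sum>k\<in>I. (p k)^2) * (\<Sum>k\<in>I. (q k)^2))"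
    by (rule real_sqrt_le_mono[OF Cauchy_Schwarz_ineq_sum])
  finally show ?thesis by (simp add: real_sqrt_mult)
qed

section \<open>trace norm\<close>

definition ml2 :: "('i::countable) op \<Rightarrow> bool" where
  "ml2 A \<longleftrightarrow> (\<forall>x\<in>l2. A x \<in> l2)"

definition TS :: "nat \<Rightarrow> (nat \<Rightarrow> ('i::countable) vec) \<Rightarrow> (nat \<Rightarrow> 'i vec) \<Rightarrow> 'i op \<Rightarrow> real" where
  "TS N \<phi> \<psi> A = (\<Sum>n<N. cmod (inner_l2 (\<phi> n) (A (\<psi> n))))"

lemma TS_nonneg: "0 \<le> TS N \<phi> \<psi> A" unfolding TS_def by (simp add: sum_nonneg)

lemma tnorm_TS: "tnorm A = (SUP N. SUP p \<in> {(\<phi>, \<psi>). orthonormal_fam N \<phi> \<and> orthonormal_fam N \<psi>}.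
       ennreal (TS N (fst p) (snd p) A))"
  unfolding tnorm_def TS_def ..

lemma tnorm_le: assumes "\<And>N \<phi> \<psi>. orthonormal_fam N \<phi> \<Longrightarrow> orthonormal_fam N \<psi> \<Longrightarrow> ennreal (TS N \<phi> \<psi> A) \<le> B"
  shows "tnorm A \<le> B"
  unfolding tnorm_TS using assms by (intro SUP_least) auto

lemma tnorm_ge: assumes "orthonormal_fam N \<phi>" "orthonormal_fam N \<psi>"
  shows "ennreal (TS N \<phi> \<psi> A) \<le> tnorm A"
proof -
  have "ennreal (TS N \<phi> \<psi> A) \<le> (SUP p \<in> {(\<phi>, \<psi>). orthonormal_fam N \<phi> \<and> orthonormal_fam N \<psi>}.
       ennreal (TS N (fst p) (snd p) A))"
    using assms by (intro SUP_upper2[of "(\<phi>,\<psi>)"]) auto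
  also have "\<dots> \<le> tnorm A" unfolding tnorm_TS by (rule SUP_upper) simp
  finally show ?thesis .
qed

lemma ofam_l2: "orthonormal_fam N \<phi> \<Longrightarrow> n < N \<Longrightarrow> \<phi> n \<in> l2"
  by (simp add: orthonormal_fam_def)

lemma tnorm_cong: assumes "\<And>x. x \<in> l2 \<Longrightarrow> A x = B x" shows "tnorm A = tnorm B"
proof -
  have "TS N \<phi> \<psi> A = TS N \<phi> \<psi> B" if "orthonormal_fam N \<psi>" for N \<phi> \<psi>
    unfolding TS_def using assms ofam_l2[OF that] by (intro sum.cong) auto
  thus ?thesis unfolding tnorm_TS by (intro SUP_cong refl) auto
qed

lemma ml2_opadd[simp]: "ml2 A \<Longrightarrow> ml2 B \<Longrightarrow> ml2 (opadd A B)" by (simp add: ml2_def opadd_def)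
lemma ml2_opsub[simp]: "ml2 A \<Longrightarrow> ml2 B \<Longrightarrow> ml2 (opsub A B)" by (simp add: ml2_def opsub_def)
lemma ml2_opscale[simp]: "ml2 A \<Longrightarrow> ml2 (opscale c A)" by (simp add: ml2_def opscale_def)
lemma ml2_ketbra[simp]: "a \<in> l2 \<Longrightarrow> ml2 (ketbra a b)" by (simp add: ml2_def ketbra_def)
lemma ml2_opzero[simp]: "ml2 opzero" by (simp add: ml2_def opzero_def)

lemma opsum_Suc: "opsum (Suc n) F = opadd (opsum n F) (F n)"
  by (simp add: opsum_def opadd_def vadd_def fun_eq_iff)
lemma opsum_0[simp]: "opsum 0 F = opzero"
  by (simp add: opsum_def opzero_def vzero_def fun_eq_iff)

lemma ml2_opsum: "(\<And>k. k<n \<Longrightarrow> ml2 (F k)) \<Longrightarrow> ml2 (opsum n F)"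
  by (induction n) (auto simp: opsum_Suc)

lemma tnorm_opadd: fixes A B :: "('i::countable) op" assumes "ml2 A" "ml2 B" shows "tnorm (opadd A B) \<le> tnorm A + tnorm B"
proof (rule tnorm_le)
  fix N and \<phi> \<psi> :: "nat \<Rightarrow> 'i vec" assume f: "orthonormal_fam N \<phi>" "orthonormal_fam N \<psi>"
  have "TS N \<phi> \<psi> (opadd A B) \<le> TS N \<phi> \<psi> A + TS N \<phi> \<psi> B"
    unfolding TS_def sum.distrib[symmetric]
  proof (rule sum_mono)
    fix n assume "n \<in> {..<N}"
    hence l: "\<phi> n \<in> l2" "\<psi> n \<in> l2" using f ofam_l2 by auto
    hence "inner_l2 (\<phi> n) (opadd A B (\<psi> n)) = inner_l2 (\<phi> n) (A (\<psi> n)) + inner_l2 (\<phi> n) (B (\<psi> n))"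
      using assms unfolding opadd_def ml2_def by (simp add: inner_add_right)
    thus "cmod (inner_l2 (\<phi> n) (opadd A B (\<psi> n))) \<le> cmod (inner_l2 (\<phi> n) (A (\<psi> n))) + cmod (inner_l2 (\<phi> n) (B (\<psi> n)))"
      by (simp add: norm_triangle_ineq)
  qed
  hence "ennreal (TS N \<phi> \<psi> (opadd A B)) \<le> ennreal (TS N \<phi> \<psi> A) + ennreal (TS N \<phi> \<psi> B)"
    by (simp add: TS_nonneg ennreal_plus[symmetric] del: ennreal_plus)
  also have "\<dots> \<le> tnorm A + tnorm B" using f by (intro add_mono tnorm_ge)
  finally show "ennreal (TS N \<phi> \<psi> (opadd A B)) \<le> tnorm A + tnorm B" .
qed

lemma tnorm_opscale: fixes A :: "('i::countable) op" assumes "ml2 A" shows "tnorm (opscale c A) \<le> ennreal (cmod c) * tnorm A"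
proof (rule tnorm_le)
  fix N and \<phi> \<psi> :: "nat \<Rightarrow> 'i vec" assume f: "orthonormal_fam N \<phi>" "orthonormal_fam N \<psi>"
  have "TS N \<phi> \<psi> (opscale c A) = cmod c * TS N \<phi> \<psi> A"
    unfolding TS_def sum_distrib_left
    by (intro sum.cong refl) (simp add: opscale_def inner_smult_right norm_mult)
  hence "ennreal (TS N \<phi> \<psi> (opscale c A)) = ennreal (cmod c) * ennreal (TS N \<phi> \<psi> A)"
    by (simp add: ennreal_mult TS_nonneg)
  also have "\<dots> \<le> ennreal (cmod c) * tnorm A" using f by (intro mult_left_mono tnorm_ge) auto
  finally show "ennreal (TS N \<phi> \<psi> (opscale c A)) \<le> ennreal (cmod c) * tnorm A" .
qed

lemma opsub_eq: "opsub A B = opadd A (opscale (-1) B)"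
  by (simp add: opsub_def opadd_def opscale_def vsub_def vadd_def smult_def fun_eq_iff)

lemma tnorm_opsub: assumes "ml2 A" "ml2 B" shows "tnorm (opsub A B) \<le> tnorm A + tnorm B"
proof -
  have "tnorm (opsub A B) \<le> tnorm A + tnorm (opscale (-1) B)"
    unfolding opsub_eq using assms by (intro tnorm_opadd) auto
  also have "tnorm (opscale (-1) B) \<le> tnorm B" using tnorm_opscale[OF assms(2), of "-1"] by simp
  finally show ?thesis by (simp add: add_left_mono)
qed

lemma tnorm_opsub_sym: "tnorm (opsub A B) = tnorm (opsub B A)"
proof -
  have "TS N \<phi> \<psi> (opsub A B) = TS N \<phi> \<psi> (opsub B A)" for N \<phi> \<psi>
    unfolding TS_def
  proof (intro sum.cong refl)
    fix n
    have "opsub B A (\<psi> n) = smult (-1) (opsub A B (\<psi> n))" by (simp add: opsub_def vsub_def smult_def fun_eq_iff)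
    thus "cmod (inner_l2 (\<phi> n) (opsub A B (\<psi> n))) = cmod (inner_l2 (\<phi> n) (opsub B A (\<psi> n)))"
      by (simp add: inner_smult_right)
  qed
  thus ?thesis unfolding tnorm_TS by simp
qed

lemma tnorm_sub_triangle: assumes "ml2 A" "ml2 B" "ml2 C"
  shows "tnorm (opsub A C) \<le> tnorm (opsub A B) + tnorm (opsub B C)"
proof -
  have "opsub A C = opadd (opsub A B) (opsub B C)"
    by (simp add: opsub_def opadd_def vsub_def vadd_def fun_eq_iff)
  thus ?thesis using assms by (simp add: tnorm_opadd)
qed

lemma tnorm_opsum: assumes "\<And>k. k<n \<Longrightarrow> ml2 (F k)" shows "tnorm (opsum n F) \<le> (\<Sum>k<n. tnorm (F k))"
  using assms
proof (induction n)
  case 0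
  have "tnorm opzero \<le> 0"
    by (rule tnorm_le) (simp add: TS_def opzero_def)
  thus ?case by simp
next
  case (Suc n)
  have "tnorm (opsum (Suc n) F) \<le> tnorm (opsum n F) + tnorm (F n)"
    unfolding opsum_Suc using Suc.prems by (intro tnorm_opadd ml2_opsum) auto
  also have "\<dots> \<le> (\<Sum>k<n. tnorm (F k)) + tnorm (F n)" using Suc by (intro add_right_mono) auto
  finally show ?case by simp
qed

lemma tnorm_ketbra: fixes a b :: "('i::countable) vec" assumes a: "a \<in> l2" and b: "b \<in> l2"
  shows "tnorm (ketbra a b) \<le> ennreal (vnorm a * vnorm b)"
proof (rule tnorm_le)
  fix N and \<phi> \<psi> :: "nat \<Rightarrow> 'i vec" assume f: "orthonormal_fam N \<phi>" "orthonormal_fam N \<psi>"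
  have "TS N \<phi> \<psi> (ketbra a b) = (\<Sum>n<N. cmod (inner_l2 (\<psi> n) b) * cmod (inner_l2 (\<phi> n) a))"
    unfolding TS_def
  proof (intro sum.cong refl)
    fix n assume "n \<in> {..<N}"
    hence "\<psi> n \<in> l2" using f ofam_l2 by auto
    thus "cmod (inner_l2 (\<phi> n) (ketbra a b (\<psi> n))) = cmod (inner_l2 (\<psi> n) b) * cmod (inner_l2 (\<phi> n) a)"
      by (simp add: ketbra_def inner_smult_right norm_mult inner_cnj[of b])
  qed
  also have "\<dots> \<le> sqrt (\<Sum>n<N. (cmod (inner_l2 (\<psi> n) b))^2) * sqrt (\<Sum>n<N. (cmod (inner_l2 (\<phi> n) a))^2)"
    by (rule sum_cs)
  also have "\<dots> \<le> vnorm b * vnorm a"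
    using bessel[OF f(2) b] bessel[OF f(1) a]
    by (intro mult_mono) (auto simp: real_le_lsqrt sum_nonneg)
  finally show "ennreal (TS N \<phi> \<psi> (ketbra a b)) \<le> ennreal (vnorm a * vnorm b)"
    by (simp add: mult.commute)
qed



lemma tc_ml2: "trace_class A \<Longrightarrow> ml2 A" by (auto simp: trace_class_def ml2_def)

lemma tnorm_opzero[simp]: "tnorm (opzero :: ('i::countable) op) = 0"
proof -
  have "tnorm (opzero :: 'i op) \<le> 0" by (rule tnorm_le) (simp add: TS_def opzero_def)
  thus ?thesis by simp
qed

lemma tc_opzero[simp]: "trace_class (opzero :: ('i::countable) op)"
  by (simp add: trace_class_def opzero_def linear_on_def vadd_def smult_def vzero_def image_subset_iff fun_eq_iff)
     (simp add: vzero_def[symmetric] opzero_def[symmetric])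

lemma tc_lin: fixes A B :: "('i::countable) op"
  assumes A: "trace_class A" and B: "trace_class B"
  shows "trace_class (opadd A (opscale c B))"
proof -
  have "tnorm (opadd A (opscale c B)) \<le> tnorm A + tnorm (opscale c B)"
    using A B by (intro tnorm_opadd) (auto simp: tc_ml2)
  also have "\<dots> \<le> tnorm A + ennreal (cmod c) * tnorm B"
    using B by (intro add_left_mono tnorm_opscale tc_ml2)
  also have "\<dots> < \<infinity>" using A B by (simp add: trace_class_def ennreal_mult_less_top)
  finally have fin: "tnorm (opadd A (opscale c B)) < \<infinity>" .
  have lin: "linear_on l2 (opadd A (opscale c B))"
    using A B unfolding trace_class_def linear_on_def
    by (auto simp: opadd_def opscale_def vadd_def smult_def fun_eq_iff algebra_simps)
  have m: "ml2 (opadd A (opscale c B))" using A B by (simp add: tc_ml2)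
  show ?thesis using A B fin lin m unfolding trace_class_def ml2_def
    by (auto simp: opadd_def opscale_def vadd_def smult_def vzero_def image_subset_iff)
qed

lemma tqds_lin: assumes "tp_qds T" "t \<ge> 0" "trace_class \<rho>" "trace_class \<sigma>"
  shows "T t (opadd \<rho> (opscale c \<sigma>)) = opadd (T t \<rho>) (opscale c (T t \<sigma>))"
proof -
  have "\<forall>t\<ge>0. \<forall>\<rho> \<sigma> c. trace_class \<rho> \<longrightarrow> trace_class \<sigma> \<longrightarrow>
        T t (opadd \<rho> (opscale c \<sigma>)) = opadd (T t \<rho>) (opscale c (T t \<sigma>))"
    using assms(1) unfolding tp_qds_def by (elim conjE) assumption
  thus ?thesis using assms(2-4) by blast
qed

lemma tqds_tc: assumes "tp_qds T" "t \<ge> 0" "trace_class \<rho>" shows "trace_class (T t \<rho>)"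
proof -
  have "\<forall>t\<ge>0. \<forall>\<rho>. trace_class \<rho> \<longrightarrow> trace_class (T t \<rho>)"
    using assms(1) unfolding tp_qds_def by (elim conjE) assumption
  thus ?thesis using assms(2-3) by blast
qed

lemma ennreal_squeeze: fixes f g :: "'a \<Rightarrow> ennreal"
  assumes "eventually (\<lambda>t. f t \<le> g t) F" "(g \<longlongrightarrow> 0) F" shows "(f \<longlongrightarrow> 0) F"
  by (rule tendsto_sandwich[OF _ assms(1) tendsto_const assms(2)]) simp

lemma D_lin_eq: "opsub (opscale k (opsub (opadd X (opscale c Y)) (opadd R (opscale c R')))) (opadd S (opscale c S')) = opadd (opsub (opscale k (opsub X R)) S) (opscale c (opsub (opscale k (opsub Y R')) S'))"
  unfolding opsub_def opadd_def opscale_def vsub_def vadd_def smult_def fun_eq_iff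
  by (simp add: algebra_simps)

lemma gen_lin: fixes T :: "real \<Rightarrow> ('i::countable) op \<Rightarrow> 'i op"
  assumes T: "tp_qds T" and g1: "gen T \<rho> \<sigma>" and g2: "gen T \<rho>' \<sigma>'"
  shows "gen T (opadd \<rho> (opscale c \<rho>')) (opadd \<sigma> (opscale c \<sigma>'))"
proof -
  have tc: "trace_class \<rho>" "trace_class \<sigma>" "trace_class \<rho>'" "trace_class \<sigma>'"
    using g1 g2 unfolding gen_def by blast+
  define D where "D r s t = opsub (opscale (complex_of_real (1 / t)) (opsub (T t r) r)) s" for r s and t::real
  have l1: "((\<lambda>t. tnorm (D \<rho> \<sigma> t)) \<longlongrightarrow> 0) (at_right 0)" using g1 by (simp add: gen_def D_def)
  have l2: "((\<lambda>t. tnorm (D \<rho>' \<sigma>' t)) \<longlongrightarrow> 0) (at_right 0)" using g2 by (simp add: gen_def D_def)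
  have "((\<lambda>t. ennreal (cmod c) * tnorm (D \<rho>' \<sigma>' t)) \<longlongrightarrow> ennreal (cmod c) * 0) (at_right 0)"
    by (rule tendsto_mult_ennreal[OF tendsto_const l2]) simp
  from tendsto_add[OF l1 this]
  have "((\<lambda>t. tnorm (D \<rho> \<sigma> t) + ennreal (cmod c) * tnorm (D \<rho>' \<sigma>' t)) \<longlongrightarrow> 0 + ennreal (cmod c) * 0) (at_right 0)" .
  hence l3: "((\<lambda>t. tnorm (D \<rho> \<sigma> t) + ennreal (cmod c) * tnorm (D \<rho>' \<sigma>' t)) \<longlongrightarrow> 0) (at_right 0)" by simp
  have ev: "eventually (\<lambda>t. tnorm (D (opadd \<rho> (opscale c \<rho>')) (opadd \<sigma> (opscale c \<sigma>')) t)
      \<le> tnorm (D \<rho> \<sigma> t) + ennreal (cmod c) * tnorm (D \<rho>' \<sigma>' t)) (at_right 0)"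
  proof (rule eventually_mono[OF eventually_at_right_less])
    fix t :: real assume "0 < t"
    hence t: "t \<ge> 0" by simp
    have e: "D (opadd \<rho> (opscale c \<rho>')) (opadd \<sigma> (opscale c \<sigma>')) t = opadd (D \<rho> \<sigma> t) (opscale c (D \<rho>' \<sigma>' t))"
    proof -
      have lin: "T t (opadd \<rho> (opscale c \<rho>')) = opadd (T t \<rho>) (opscale c (T t \<rho>'))"
        by (rule tqds_lin[OF T t tc(1) tc(3)])
      show ?thesis unfolding D_def lin by (rule D_lin_eq)
    qed
    have "ml2 (T t \<rho>)" "ml2 (T t \<rho>')" "ml2 \<rho>" "ml2 \<rho>'" "ml2 \<sigma>" "ml2 \<sigma>'"
      using tc tqds_tc[OF T t] tc_ml2 by auto
    hence m: "ml2 (D \<rho> \<sigma> t)" "ml2 (D \<rho>' \<sigma>' t)" unfolding D_def by simp_all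
    have "tnorm (D (opadd \<rho> (opscale c \<rho>')) (opadd \<sigma> (opscale c \<sigma>')) t) = tnorm (opadd (D \<rho> \<sigma> t) (opscale c (D \<rho>' \<sigma>' t)))"
      by (simp only: e)
    also have "\<dots> \<le> tnorm (D \<rho> \<sigma> t) + tnorm (opscale c (D \<rho>' \<sigma>' t))"
      using m by (intro tnorm_opadd) auto
    also have "\<dots> \<le> tnorm (D \<rho> \<sigma> t) + ennreal (cmod c) * tnorm (D \<rho>' \<sigma>' t)"
      using m by (intro add_left_mono tnorm_opscale)
    finally show "tnorm (D (opadd \<rho> (opscale c \<rho>')) (opadd \<sigma> (opscale c \<sigma>')) t)
      \<le> tnorm (D \<rho> \<sigma> t) + ennreal (cmod c) * tnorm (D \<rho>' \<sigma>' t)" .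
  qed
  have "((\<lambda>t. tnorm (D (opadd \<rho> (opscale c \<rho>')) (opadd \<sigma> (opscale c \<sigma>')) t)) \<longlongrightarrow> 0) (at_right 0)"
    by (rule ennreal_squeeze[OF ev l3])
  hence lim': "((\<lambda>t. tnorm (opsub (opscale (complex_of_real (1 / t)) (opsub (T t (opadd \<rho> (opscale c \<rho>'))) (opadd \<rho> (opscale c \<rho>')))) (opadd \<sigma> (opscale c \<sigma>')))) \<longlongrightarrow> 0) (at_right 0)"
    by (simp only: D_def)
  show ?thesis unfolding gen_def by (intro conjI tc_lin tc lim')
qed

lemma opscale_1[simp]: "opscale 1 A = A" by (simp add: opscale_def smult_def fun_eq_iff)

lemma gen_add: "tp_qds T \<Longrightarrow> gen T \<rho> \<sigma> \<Longrightarrow> gen T \<rho>' \<sigma>' \<Longrightarrow> gen T (opadd \<rho> \<rho>') (opadd \<sigma> \<sigma>')"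
  using gen_lin[of T \<rho> \<sigma> \<rho>' \<sigma>' 1] by simp

lemma gen_unique: fixes T :: "real \<Rightarrow> ('i::countable) op \<Rightarrow> 'i op"
  assumes T: "tp_qds T" and g1: "gen T \<rho> s1" and g2: "gen T \<rho> s2"
  shows "tnorm (opsub s1 s2) = 0"
proof -
  have tc: "trace_class \<rho>" "trace_class s1" "trace_class s2"
    using g1 g2 unfolding gen_def by blast+
  define D where "D t = opscale (complex_of_real (1 / t)) (opsub (T t \<rho>) \<rho>)" for t::real
  have l1: "((\<lambda>t. tnorm (opsub (D t) s1)) \<longlongrightarrow> 0) (at_right 0)" using g1 by (simp add: gen_def D_def)
  have l2: "((\<lambda>t. tnorm (opsub (D t) s2)) \<longlongrightarrow> 0) (at_right 0)" using g2 by (simp add: gen_def D_def)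
  have l3: "((\<lambda>t. tnorm (opsub (D t) s1) + tnorm (opsub (D t) s2)) \<longlongrightarrow> 0) (at_right 0)"
    using tendsto_add[OF l1 l2] by simp
  have ev: "eventually (\<lambda>t. tnorm (opsub s1 s2) \<le> tnorm (opsub (D t) s1) + tnorm (opsub (D t) s2)) (at_right 0)"
  proof (rule eventually_mono[OF eventually_at_right_less])
    fix t :: real assume "0 < t"
    hence t: "t \<ge> 0" by simp
    have "ml2 (T t \<rho>)" "ml2 \<rho>" using tc tqds_tc[OF T t] tc_ml2 by auto
    hence m: "ml2 (D t)" unfolding D_def by simp
    have "tnorm (opsub s1 s2) \<le> tnorm (opsub s1 (D t)) + tnorm (opsub (D t) s2)"
      using m tc by (intro tnorm_sub_triangle) (auto simp: tc_ml2)
    thus "tnorm (opsub s1 s2) \<le> tnorm (opsub (D t) s1) + tnorm (opsub (D t) s2)"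
      by (simp add: tnorm_opsub_sym)
  qed
  have "tnorm (opsub s1 s2) \<le> 0"
    by (rule tendsto_le[OF _ l3 tendsto_const ev]) simp
  thus ?thesis by simp
qed

lemma gen_opzero: fixes T :: "real \<Rightarrow> ('i::countable) op \<Rightarrow> 'i op"
  assumes T: "tp_qds T" shows "gen T opzero opzero"
proof -
  have z: "T t opzero = opzero" if t: "t \<ge> 0" for t
  proof -
    have h0: "opadd opzero (opscale 1 (opzero::'i op)) = opzero"
      by (simp add: opadd_def opzero_def vadd_def vzero_def fun_eq_iff)
    have eq: "T t opzero = opadd (T t opzero) (opscale 1 (T t opzero))"
      using tqds_lin[OF T t tc_opzero tc_opzero, of 1] unfolding h0 .
    show ?thesis
    proof (intro ext)
      fix x i
      have "T t opzero x i = opadd (T t opzero) (opscale 1 (T t opzero)) x i" using eq by (rule fun_cong[OF fun_cong])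
      hence "T t opzero x i = T t opzero x i + T t opzero x i" by (simp only: opadd_def vadd_def opscale_def smult_def mult_1)
      thus "T t opzero x i = opzero x i" by (simp add: opzero_def vzero_def)
    qed
  qed
  have ev: "eventually (\<lambda>t. tnorm (opsub (opscale (complex_of_real (1 / t)) (opsub (T t opzero) opzero)) opzero) = 0) (at_right (0::real))"
  proof (rule eventually_mono[OF eventually_at_right_less])
    fix t :: real assume "0 < t"
    hence "T t opzero = opzero" using z by simp
    moreover have "opsub (opscale k (opsub opzero opzero)) opzero = (opzero::'i op)" for k
      by (simp add: opsub_def opscale_def vsub_def smult_def opzero_def vzero_def fun_eq_iff)
    ultimately show "tnorm (opsub (opscale (complex_of_real (1 / t)) (opsub (T t opzero) opzero)) opzero) = 0"
      by simp
  qed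
  have "((\<lambda>t. tnorm (opsub (opscale (complex_of_real (1 / t)) (opsub (T t opzero) opzero)) opzero)) \<longlongrightarrow> 0) (at_right 0)"
    by (rule tendsto_eventually[OF ev])
  thus ?thesis unfolding gen_def using tc_opzero by blast
qed



lemma ketbra_diff_eq: assumes "v \<in> l2" "v' \<in> l2"
  shows "opsub (ketbra u v) (ketbra u' v') = opadd (ketbra (vsub u u') v) (ketbra u' (vsub v v'))"
proof (intro ext)
  fix x i
  show "opsub (ketbra u v) (ketbra u' v') x i = opadd (ketbra (vsub u u') v) (ketbra u' (vsub v v')) x i"
  proof (cases "x \<in> l2")
    case True
    hence h: "inner_l2 (\<lambda>i. v i - v' i) x = inner_l2 v x - inner_l2 v' x" using assms inner_sub_left[of x v v']
      by (simp add: vsub_def)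
    show ?thesis using True
      by (simp add: ketbra_def opsub_def opadd_def vsub_def vadd_def smult_def h algebra_simps)
  qed (simp add: ketbra_def opsub_def opadd_def vsub_def vadd_def vzero_def)
qed

lemma tnorm_ketbra_diff: fixes u v u' v' :: "('i::countable) vec"
  assumes "u \<in> l2" "v \<in> l2" "u' \<in> l2" "v' \<in> l2"
  shows "tnorm (opsub (ketbra u v) (ketbra u' v')) \<le> ennreal (vnorm (vsub u u') * vnorm v + vnorm u' * vnorm (vsub v v'))"
proof -
  have "tnorm (opsub (ketbra u v) (ketbra u' v')) \<le> tnorm (ketbra (vsub u u') v) + tnorm (ketbra u' (vsub v v'))"
    unfolding ketbra_diff_eq[OF assms(2,4)] using assms by (intro tnorm_opadd) auto
  also have "\<dots> \<le> ennreal (vnorm (vsub u u') * vnorm v) + ennreal (vnorm u' * vnorm (vsub v v'))"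
    using assms by (intro add_mono tnorm_ketbra) auto
  also have "\<dots> = ennreal (vnorm (vsub u u') * vnorm v + vnorm u' * vnorm (vsub v v'))"
    by (simp add: ennreal_plus[symmetric] del: ennreal_plus)
  finally show ?thesis .
qed

lemma opsum_sub: "opsub (opsum n F) (opsum n G) = opsum n (\<lambda>k. opsub (F k) (G k))"
  by (simp add: opsub_def opsum_def vsub_def fun_eq_iff sum_subtractf)

locale gsf_loc =
  fixes T :: "real \<Rightarrow> ('i::countable) op \<Rightarrow> 'i op" and DM :: "'i vec set" and M :: "'i op" and L :: "nat \<Rightarrow> 'i op"
  assumes gsf: "gen_standard_form T DM M L"
begin

lemma gsf_sub: "subspace_l2 DM"
  using gsf unfolding gen_standard_form_def by (elim conjE) assumption
lemma gsf_Ml2: "\<forall>\<phi>\<in>DM. M \<phi> \<in> l2"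
  using gsf unfolding gen_standard_form_def by (elim conjE) assumption
lemma gsf_Mlin: "linear_on DM M"
  using gsf unfolding gen_standard_form_def by (elim conjE) assumption
lemma gsf_closed: "closed_op DM M"
  using gsf unfolding gen_standard_form_def by (elim conjE) assumption
lemma gsf_dense: "densely_defined DM"
  using gsf unfolding gen_standard_form_def by (elim conjE) assumption
lemma gsf_rb: "\<forall>k. rel_bounded DM M (L k)"
  using gsf unfolding gen_standard_form_def by (elim conjE) assumption
lemma gsf_gen: "\<forall>\<phi>\<in>DM. \<forall>\<psi>\<in>DM. \<exists>\<sigma>. gen T (ketbra \<phi> \<psi>) \<sigma> \<and>
        (\<lambda>n. tnorm (opsub (opsub (opsub (opsum n (\<lambda>k. ketbra (L k \<phi>) (L k \<psi>)))
                 (ketbra (M \<phi>) \<psi>)) (ketbra \<phi> (M \<psi>))) \<sigma>)) \<longlonglongrightarrow> 0"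
  using gsf unfolding gen_standard_form_def by (elim conjE) assumption
lemma gsf_dom: "gen_dom T = graph_closure T (D0 DM)"
  using gsf unfolding gen_standard_form_def by (elim conjE) assumption
lemma gsf_sums: "\<forall>\<phi>\<in>DM. (\<lambda>k. complex_of_real ((vnorm (L k \<phi>))\<^sup>2)) sums
        (inner_l2 \<phi> (M \<phi>) + inner_l2 (M \<phi>) \<phi>)"
  using gsf unfolding gen_standard_form_def by (elim conjE) assumption

lemma DM_l2: "x \<in> DM \<Longrightarrow> x \<in> l2"
  using gsf_sub unfolding subspace_l2_def by blast

lemma DM_lin: "x \<in> DM \<Longrightarrow> y \<in> DM \<Longrightarrow> vadd x (smult c y) \<in> DM"
  using gsf_sub unfolding subspace_l2_def by blast

lemma DM_vzero: "vzero \<in> DM"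
  using gsf_sub unfolding subspace_l2_def by blast

lemma DM_vsub: "x \<in> DM \<Longrightarrow> y \<in> DM \<Longrightarrow> vsub x y \<in> DM"
  by (simp add: vsub_eq DM_lin)

lemma DM_smult: "y \<in> DM \<Longrightarrow> smult c y \<in> DM"
proof -
  assume "y \<in> DM"
  hence "vadd vzero (smult c y) \<in> DM" using DM_lin DM_vzero by blast
  thus ?thesis by (simp add: vadd_def vzero_def)
qed

lemma DM_vadd: "x \<in> DM \<Longrightarrow> y \<in> DM \<Longrightarrow> vadd x y \<in> DM"
  using DM_lin[of x y 1] by (simp add: smult_def)

lemma M_l2: "x \<in> DM \<Longrightarrow> M x \<in> l2" using gsf_Ml2 by blast

lemma L_l2: "x \<in> DM \<Longrightarrow> L k x \<in> l2" using gsf_rb unfolding rel_bounded_def by blast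

lemma L_lin: "linear_on DM (L k)" using gsf_rb unfolding rel_bounded_def by blast

lemma lin_sub: assumes "linear_on DM F" "x \<in> DM" "y \<in> DM" shows "F (vsub x y) = vsub (F x) (F y)"
  using assms unfolding linear_on_def vsub_eq by simp

lemma Lsq_bound: assumes "\<phi> \<in> DM" shows "(\<Sum>k<n. (vnorm (L k \<phi>))^2) \<le> 2 * (vnorm \<phi> * vnorm (M \<phi>))"
proof -
  have s: "(\<lambda>k. complex_of_real ((vnorm (L k \<phi>))\<^sup>2)) sums (inner_l2 \<phi> (M \<phi>) + inner_l2 (M \<phi>) \<phi>)"
    using gsf_sums assms by blast
  from sums_Re[OF s] have s': "(\<lambda>k. (vnorm (L k \<phi>))\<^sup>2) sums Re (inner_l2 \<phi> (M \<phi>) + inner_l2 (M \<phi>) \<phi>)"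
    by simp
  have "(\<Sum>k<n. (vnorm (L k \<phi>))^2) \<le> (\<Sum>k. (vnorm (L k \<phi>))^2)"
    by (rule sum_le_suminf[OF sums_summable[OF s']]) auto
  also have "\<dots> = Re (inner_l2 \<phi> (M \<phi>) + inner_l2 (M \<phi>) \<phi>)" using s' sums_unique by metis
  also have "\<dots> = 2 * Re (inner_l2 \<phi> (M \<phi>))" by (subst inner_cnj[of "M \<phi>"]) simp
  also have "\<dots> \<le> 2 * cmod (inner_l2 \<phi> (M \<phi>))" using complex_Re_le_cmod by simp
  also have "\<dots> \<le> 2 * (vnorm \<phi> * vnorm (M \<phi>))"
    using inner_cs[OF DM_l2[OF assms] M_l2[OF assms]] by simp
  finally show ?thesis .
qed


definition P :: "nat \<Rightarrow> 'i vec \<Rightarrow> 'i vec \<Rightarrow> 'i op" where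
  "P n a b = opsum n (\<lambda>k. ketbra (L k a) (L k b))"

definition X :: "nat \<Rightarrow> 'i vec \<Rightarrow> 'i vec \<Rightarrow> 'i op" where
  "X n a b = opsub (opsub (P n a b) (ketbra (M a) b)) (ketbra a (M b))"

definition sig :: "'i vec \<Rightarrow> 'i vec \<Rightarrow> 'i op" where
  "sig a b = (SOME \<sigma>. gen T (ketbra a b) \<sigma> \<and> (\<lambda>n. tnorm (opsub (X n a b) \<sigma>)) \<longlonglongrightarrow> 0)"

lemma sig_prop: assumes "a \<in> DM" "b \<in> DM"
  shows "gen T (ketbra a b) (sig a b)" "(\<lambda>n. tnorm (opsub (X n a b) (sig a b))) \<longlonglongrightarrow> 0"
proof -
  have "\<exists>\<sigma>. gen T (ketbra a b) \<sigma> \<and> (\<lambda>n. tnorm (opsub (X n a b) \<sigma>)) \<longlonglongrightarrow> 0"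
    using gsf_gen assms unfolding X_def P_def by blast
  from someI_ex[OF this]
  show "gen T (ketbra a b) (sig a b)" "(\<lambda>n. tnorm (opsub (X n a b) (sig a b))) \<longlonglongrightarrow> 0"
    unfolding sig_def by blast+
qed

lemma ml2_P: "a \<in> DM \<Longrightarrow> ml2 (P n a b)"
  unfolding P_def by (intro ml2_opsum ml2_ketbra L_l2)

lemma ml2_X: "a \<in> DM \<Longrightarrow> b \<in> DM \<Longrightarrow> ml2 (X n a b)"
  unfolding X_def by (simp add: ml2_P M_l2 DM_l2)

definition PB :: "'i vec \<Rightarrow> 'i vec \<Rightarrow> 'i vec \<Rightarrow> 'i vec \<Rightarrow> real" where
  "PB a b a' b' = sqrt (2 * (vnorm (vsub a a') * vnorm (vsub (M a) (M a')))) * sqrt (2 * (vnorm b * vnorm (M b)))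
     + sqrt (2 * (vnorm a' * vnorm (M a'))) * sqrt (2 * (vnorm (vsub b b') * vnorm (vsub (M b) (M b'))))"

definition KB :: "'i vec \<Rightarrow> 'i vec \<Rightarrow> 'i vec \<Rightarrow> 'i vec \<Rightarrow> real" where
  "KB a b a' b' = vnorm (vsub (M a) (M a')) * vnorm b + vnorm (M a') * vnorm (vsub b b')
     + (vnorm (vsub a a') * vnorm (M b) + vnorm a' * vnorm (vsub (M b) (M b')))"

lemma P_diff: assumes a: "a \<in> DM" and b: "b \<in> DM" and a': "a' \<in> DM" and b': "b' \<in> DM"
  shows "tnorm (opsub (P n a b) (P n a' b')) \<le> ennreal (PB a b a' b')"
proof -
  define d where "d = vsub a a'"
  define e where "e = vsub b b'"
  have d: "d \<in> DM" and e: "e \<in> DM" using DM_vsub a a' b b' by (auto simp: d_def e_def)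
  have Md: "M d = vsub (M a) (M a')" unfolding d_def by (rule lin_sub[OF gsf_Mlin a a'])
  have Me: "M e = vsub (M b) (M b')" unfolding e_def by (rule lin_sub[OF gsf_Mlin b b'])
  have "tnorm (opsub (P n a b) (P n a' b')) \<le> (\<Sum>k<n. tnorm (opsub (ketbra (L k a) (L k b)) (ketbra (L k a') (L k b'))))"
    unfolding P_def opsum_sub using a a' by (intro tnorm_opsum ml2_opsub ml2_ketbra L_l2)
  also have "\<dots> \<le> (\<Sum>k<n. ennreal (vnorm (L k d) * vnorm (L k b) + vnorm (L k a') * vnorm (L k e)))"
  proof (rule sum_mono)
    fix k
    have "L k d = vsub (L k a) (L k a')" unfolding d_def by (rule lin_sub[OF L_lin a a'])
    moreover have "L k e = vsub (L k b) (L k b')" unfolding e_def by (rule lin_sub[OF L_lin b b'])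
    ultimately show "tnorm (opsub (ketbra (L k a) (L k b)) (ketbra (L k a') (L k b')))
        \<le> ennreal (vnorm (L k d) * vnorm (L k b) + vnorm (L k a') * vnorm (L k e))"
      using tnorm_ketbra_diff[OF L_l2[OF a] L_l2[OF b] L_l2[OF a'] L_l2[OF b']] by simp
  qed
  also have "\<dots> = ennreal (\<Sum>k<n. vnorm (L k d) * vnorm (L k b) + vnorm (L k a') * vnorm (L k e))"
    by (rule sum_ennreal) simp
  also have "\<dots> \<le> ennreal (PB a b a' b')"
  proof (rule ennreal_leI)
    have "(\<Sum>k<n. vnorm (L k d) * vnorm (L k b) + vnorm (L k a') * vnorm (L k e))
        = (\<Sum>k<n. vnorm (L k d) * vnorm (L k b)) + (\<Sum>k<n. vnorm (L k a') * vnorm (L k e))"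
      by (rule sum.distrib)
    also have "\<dots> \<le> sqrt (\<Sum>k<n. (vnorm (L k d))^2) * sqrt (\<Sum>k<n. (vnorm (L k b))^2)
        + sqrt (\<Sum>k<n. (vnorm (L k a'))^2) * sqrt (\<Sum>k<n. (vnorm (L k e))^2)"
      by (intro add_mono sum_cs)
    also have "\<dots> \<le> PB a b a' b'"
      unfolding PB_def d_def[symmetric] e_def[symmetric] Md[symmetric] Me[symmetric]
      using Lsq_bound[OF d, of n] Lsq_bound[OF b, of n] Lsq_bound[OF a', of n] Lsq_bound[OF e, of n]
      by (intro add_mono mult_mono real_sqrt_le_mono) (auto simp: sum_nonneg)
    finally show "(\<Sum>k<n. vnorm (L k d) * vnorm (L k b) + vnorm (L k a') * vnorm (L k e)) \<le> PB a b a' b'" .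
  qed
  finally show ?thesis .
qed

lemma X_diff: assumes a: "a \<in> DM" and b: "b \<in> DM" and a': "a' \<in> DM" and b': "b' \<in> DM"
  shows "tnorm (opsub (X n a b) (X n a' b')) \<le> ennreal (PB a b a' b' + KB a b a' b')"
proof -
  have l: "a \<in> l2" "b \<in> l2" "a' \<in> l2" "b' \<in> l2" "M a \<in> l2" "M b \<in> l2" "M a' \<in> l2" "M b' \<in> l2"
    using assms by (auto simp: DM_l2 M_l2)
  have eq: "opsub (X n a b) (X n a' b') = opsub (opsub (opsub (P n a b) (P n a' b'))
      (opsub (ketbra (M a) b) (ketbra (M a') b'))) (opsub (ketbra a (M b)) (ketbra a' (M b')))"
    unfolding X_def by (simp add: opsub_def vsub_def fun_eq_iff)
  have m: "ml2 (opsub (P n a b) (P n a' b'))" using a a' by (simp add: ml2_P)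
  have "tnorm (opsub (X n a b) (X n a' b')) \<le> tnorm (opsub (opsub (P n a b) (P n a' b'))
      (opsub (ketbra (M a) b) (ketbra (M a') b'))) + tnorm (opsub (ketbra a (M b)) (ketbra a' (M b')))"
    unfolding eq using m l by (intro tnorm_opsub) auto
  also have "\<dots> \<le> (tnorm (opsub (P n a b) (P n a' b')) + tnorm (opsub (ketbra (M a) b) (ketbra (M a') b')))
      + tnorm (opsub (ketbra a (M b)) (ketbra a' (M b')))"
    using m l by (intro add_right_mono tnorm_opsub) auto
  also have "\<dots> \<le> (ennreal (PB a b a' b') + ennreal (vnorm (vsub (M a) (M a')) * vnorm b + vnorm (M a') * vnorm (vsub b b')))
      + ennreal (vnorm (vsub a a') * vnorm (M b) + vnorm a' * vnorm (vsub (M b) (M b')))"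
    using l by (intro add_mono P_diff[OF assms] tnorm_ketbra_diff)
  also have "\<dots> = ennreal (PB a b a' b' + KB a b a' b')"
    unfolding KB_def
    by (simp add: ennreal_plus[symmetric] PB_def add.assoc del: ennreal_plus)
  finally show ?thesis .
qed

lemma sig_diff: assumes a: "a \<in> DM" and b: "b \<in> DM" and a': "a' \<in> DM" and b': "b' \<in> DM"
  shows "tnorm (opsub (sig a b) (sig a' b')) \<le> ennreal (PB a b a' b' + KB a b a' b')"
proof -
  have tc: "trace_class (sig a b)" "trace_class (sig a' b')"
    using sig_prop(1)[OF a b] sig_prop(1)[OF a' b'] by (auto simp: gen_def)
  have l1: "(\<lambda>n. tnorm (opsub (X n a b) (sig a b))) \<longlonglongrightarrow> 0" by (rule sig_prop(2)[OF a b])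
  have l2: "(\<lambda>n. tnorm (opsub (X n a' b') (sig a' b'))) \<longlonglongrightarrow> 0" by (rule sig_prop(2)[OF a' b'])
  have lim: "(\<lambda>n. tnorm (opsub (X n a b) (sig a b)) + ennreal (PB a b a' b' + KB a b a' b') + tnorm (opsub (X n a' b') (sig a' b')))
      \<longlonglongrightarrow> 0 + ennreal (PB a b a' b' + KB a b a' b') + 0"
    by (intro tendsto_add l1 l2 tendsto_const)
  have ev: "\<forall>\<^sub>F n in sequentially. tnorm (opsub (sig a b) (sig a' b')) \<le>
     tnorm (opsub (X n a b) (sig a b)) + ennreal (PB a b a' b' + KB a b a' b') + tnorm (opsub (X n a' b') (sig a' b'))"
  proof (rule always_eventually, rule allI)
    fix n
    have m: "ml2 (sig a b)" "ml2 (sig a' b')" "ml2 (X n a b)" "ml2 (X n a' b')"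
      using tc assms by (auto simp: tc_ml2 ml2_X)
    have "tnorm (opsub (sig a b) (sig a' b')) \<le> tnorm (opsub (sig a b) (X n a b)) + tnorm (opsub (X n a b) (sig a' b'))"
      using m by (intro tnorm_sub_triangle)
    also have "tnorm (opsub (X n a b) (sig a' b')) \<le> tnorm (opsub (X n a b) (X n a' b')) + tnorm (opsub (X n a' b') (sig a' b'))"
      using m by (intro tnorm_sub_triangle)
    also have "tnorm (opsub (X n a b) (X n a' b')) \<le> ennreal (PB a b a' b' + KB a b a' b')"
      by (rule X_diff[OF assms])
    finally show "tnorm (opsub (sig a b) (sig a' b')) \<le>
     tnorm (opsub (X n a b) (sig a b)) + ennreal (PB a b a' b' + KB a b a' b') + tnorm (opsub (X n a' b') (sig a' b'))"
      by (simp add: tnorm_opsub_sym add.assoc add_mono)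
  qed
  have "tnorm (opsub (sig a b) (sig a' b')) \<le> 0 + ennreal (PB a b a' b' + KB a b a' b') + 0"
    by (rule tendsto_le[OF trivial_limit_sequentially lim tendsto_const ev])
  thus ?thesis by simp
qed

end



section \<open>rational finitely supported vectors are dense\<close>

lemma rat_approx: assumes "\<delta> > 0" shows "\<exists>p q::rat. cmod (z - Complex (of_rat p) (of_rat q)) < \<delta>"
proof -
  obtain r1 where r1: "r1 \<in> \<rat>" "Re z < r1" "r1 < Re z + \<delta>/2" using Rats_dense_in_real[of "Re z" "Re z + \<delta>/2"] assms by auto
  obtain r2 where r2: "r2 \<in> \<rat>" "Im z < r2" "r2 < Im z + \<delta>/2" using Rats_dense_in_real[of "Im z" "Im z + \<delta>/2"] assms by auto
  obtain p where p: "r1 = of_rat p" using r1(1) Rats_cases by blast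
  obtain q where q: "r2 = of_rat q" using r2(1) Rats_cases by blast
  have "cmod (z - Complex r1 r2) \<le> \<bar>Re z - r1\<bar> + \<bar>Im z - r2\<bar>" using cmod_le[of "z - Complex r1 r2"] by simp
  also have "\<dots> < \<delta>" using r1 r2 by simp
  finally show ?thesis using p q by blast
qed

primrec vec_of :: "(('i::countable) \<times> rat \<times> rat) list \<Rightarrow> 'i vec" where
  "vec_of [] = vzero"
| "vec_of (t # ts) = (vec_of ts)(fst t := Complex (of_rat (fst (snd t))) (of_rat (snd (snd t))))"

lemma vec_of_supp: "{i. vec_of ts i \<noteq> 0} \<subseteq> fst ` set ts"
  by (induction ts) (auto simp: vzero_def)

lemma finite_supp_l2: assumes "finite {i. y i \<noteq> 0}" shows "y \<in> l2"
proof -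
  have "finite {i\<in>UNIV. (cmod (y i))^2 \<noteq> 0}" using assms by simp
  thus ?thesis unfolding l2_def by (simp add: finite_nonzero_values_imp_summable_on)
qed

lemma vec_of_l2: "vec_of ts \<in> l2"
  by (rule finite_supp_l2, rule finite_subset[OF vec_of_supp]) simp

lemma approx_finite: assumes "finite F" "\<delta> > 0"
  shows "\<exists>ts. (\<forall>i\<in>F. cmod (x i - vec_of ts i) < \<delta>) \<and> (\<forall>i. i \<notin> F \<longrightarrow> vec_of ts i = 0)"
  using assms(1)
proof (induction F rule: finite_induct)
  case empty
  show ?case by (intro exI[of _ "[]"]) (simp add: vzero_def)
next
  case (insert j F)
  obtain ts where ts: "\<forall>i\<in>F. cmod (x i - vec_of ts i) < \<delta>" "\<forall>i. i \<notin> F \<longrightarrow> vec_of ts i = 0"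
    using insert by blast
  obtain p q where pq: "cmod (x j - Complex (of_rat p) (of_rat q)) < \<delta>" using rat_approx[OF assms(2)] by blast
  show ?case
    using ts pq insert(2) by (intro exI[of _ "(j,p,q) # ts"]) auto
qed

lemma infsum_finite_supp: fixes h :: "'a \<Rightarrow> real"
  assumes "finite F" "\<And>i. i \<notin> F \<Longrightarrow> h i = 0" shows "infsum h UNIV = sum h F"
proof -
  have "infsum h UNIV = infsum h F" by (rule infsum_cong_neutral) (use assms in auto)
  thus ?thesis using assms by simp
qed

lemma l2_dense_rat: fixes x :: "('i::countable) vec"
  assumes x: "x \<in> l2" and e: "\<epsilon> > 0" shows "\<exists>ts. vnorm (vsub x (vec_of ts)) < \<epsilon>"
proof -
  define f where "f i = (cmod (x i))^2" for i
  have sf: "f summable_on UNIV" using x unfolding l2_def f_def[abs_def] by simp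
  obtain F where F: "finite F" "dist (sum f F) (infsum f UNIV) \<le> (\<epsilon>/3)^2"
    using infsum_finite_approximation[OF sf, of "(\<epsilon>/3)^2"] e by auto
  define xF where "xF i = (if i \<in> F then x i else 0)" for i
  have xF: "xF \<in> l2" by (rule finite_supp_l2, rule finite_subset[of _ F]) (use F in \<open>auto simp: xF_def\<close>)
  define f1 where "f1 i = (if i \<in> F then f i else 0)" for i
  define f2 where "f2 i = (if i \<in> F then 0 else f i)" for i
  have s1: "f1 summable_on UNIV"
    by (rule finite_nonzero_values_imp_summable_on, rule finite_subset[of _ F]) (use F in \<open>auto simp: f1_def\<close>)
  have s2: "f2 summable_on UNIV"
    by (rule summable_on_comparison_test[OF sf]) (auto simp: f2_def f_def)
  have "infsum f UNIV = infsum (\<lambda>i. f1 i + f2 i) UNIV" by (rule infsum_cong) (simp add: f1_def f2_def)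
  also have "\<dots> = infsum f1 UNIV + infsum f2 UNIV" by (rule infsum_add[OF s1 s2])
  also have "infsum f1 UNIV = sum f F" using F(1) by (subst infsum_finite_supp[of F]) (auto simp: f1_def)
  finally have tail: "infsum f2 UNIV = infsum f UNIV - sum f F" by simp
  have "sum f F \<le> infsum f UNIV" by (rule finite_sum_le_infsum[OF sf F(1)]) (auto simp: f_def)
  hence tail2: "infsum f2 UNIV \<le> (\<epsilon>/3)^2" using F(2) tail by (simp add: dist_real_def)
  have "(vnorm (vsub x xF))^2 = infsum f2 UNIV"
    unfolding vnorm_sq by (rule infsum_cong) (simp add: f2_def f_def vsub_def xF_def)
  hence "(vnorm (vsub x xF))^2 \<le> (\<epsilon>/3)^2" using tail2 by linarith
  hence n1: "vnorm (vsub x xF) \<le> \<epsilon>/3" by (rule power2_le_imp_le) (use e in simp)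
  define \<delta> where "\<delta> = \<epsilon> / (3 * (real (card F) + 1))"
  have d: "\<delta> > 0" using e by (simp add: \<delta>_def add_pos_nonneg)
  obtain ts where ts: "\<forall>i\<in>F. cmod (x i - vec_of ts i) < \<delta>" "\<forall>i. i \<notin> F \<longrightarrow> vec_of ts i = 0"
    using approx_finite[OF F(1) d] by blast
  have "(vnorm (vsub xF (vec_of ts)))^2 = (\<Sum>i\<in>F. (cmod (x i - vec_of ts i))^2)"
    unfolding vnorm_sq by (subst infsum_finite_supp[OF F(1)]) (auto simp: vsub_def xF_def ts(2) intro!: sum.cong)
  also have "\<dots> \<le> (\<Sum>i\<in>F. \<delta>^2)"
    using ts(1) by (intro sum_mono power_mono) (auto simp: less_imp_le)
  also have "\<dots> = real (card F) * \<delta>^2" by simp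
  also have "\<dots> \<le> ((real (card F) + 1) * \<delta>)^2"
  proof -
    have "real (card F) * \<delta>^2 \<le> (real (card F) + 1)^2 * \<delta>^2"
    proof (intro mult_right_mono)
      have cc: "0 \<le> real (card F) * real (card F)" by simp
      thus "real (card F) \<le> (real (card F) + 1)^2" unfolding power2_eq_square by (simp add: ring_distribs)
    qed simp
    thus ?thesis by (simp add: power_mult_distrib)
  qed
  finally have "vnorm (vsub xF (vec_of ts)) \<le> (real (card F) + 1) * \<delta>"
  proof (rule power2_le_imp_le)
    show "0 \<le> (real (card F) + 1) * \<delta>" by (rule mult_nonneg_nonneg) (use d in linarith)+
  qed
  moreover have "(real (card F) + 1) * \<delta> = \<epsilon>/3"
  proof -
    have pos: "real (card F) + 1 \<noteq> 0" by linarith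
    show ?thesis unfolding \<delta>_def using pos by (simp add: field_simps)
  qed
  ultimately have n2: "vnorm (vsub xF (vec_of ts)) \<le> \<epsilon>/3" by simp
  have "vnorm (vsub x (vec_of ts)) \<le> vnorm (vsub x xF) + vnorm (vsub xF (vec_of ts))"
    using x xF vec_of_l2 by (intro vnorm_sub_triangle)
  also have "\<dots> < \<epsilon>" using n1 n2 e by linarith
  finally show ?thesis by blast
qed



context gsf_loc
begin

section \<open>a countable graph-dense sequence in DM\<close>

definition rr :: "nat \<Rightarrow> real" where "rr m = inverse (real (Suc m))"

definition pcond :: "(('i \<times> rat \<times> rat) list \<times> ('i \<times> rat \<times> rat) list \<times> nat) \<Rightarrow> 'i vec \<Rightarrow> bool" where
  "pcond j x \<longleftrightarrow> x \<in> DM \<and> vnorm (vsub x (vec_of (fst j))) < rr (snd (snd j)) \<and>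
      vnorm (vsub (M x) (vec_of (fst (snd j)))) < rr (snd (snd j))"

definition pick :: "(('i \<times> rat \<times> rat) list \<times> ('i \<times> rat \<times> rat) list \<times> nat) \<Rightarrow> 'i vec" where
  "pick j = (if \<exists>x. pcond j x then (SOME x. pcond j x) else vzero)"

definition dseq :: "nat \<Rightarrow> 'i vec" where "dseq n = pick (from_nat n)"

lemma pick_DM: "pick j \<in> DM"
proof (cases "\<exists>x. pcond j x")
  case True
  hence "pcond j (SOME x. pcond j x)" by (rule someI_ex)
  moreover have "pick j = (SOME x. pcond j x)" using True by (simp add: pick_def)
  ultimately show ?thesis unfolding pcond_def by simp
qed (simp add: pick_def DM_vzero)

lemma dseq_DM: "dseq n \<in> DM" by (simp add: dseq_def pick_DM)

lemma dseq_l2: "dseq n \<in> l2" by (rule DM_l2[OF dseq_DM])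

lemma dseq_dense: assumes a: "a \<in> DM" and e: "\<epsilon> > 0"
  shows "\<exists>n. vnorm (vsub (dseq n) a) < \<epsilon> \<and> vnorm (vsub (M (dseq n)) (M a)) < \<epsilon>"
proof -
  obtain k where k: "k > 0" "inverse (real k) < \<epsilon>/2" using ex_inverse_of_nat_less[of "\<epsilon>/2"] e by auto
  define m where "m = k - 1"
  have rm: "rr m < \<epsilon>/2" using k by (simp add: rr_def m_def)
  have rpos: "rr m > 0" by (simp add: rr_def)
  obtain p where p: "vnorm (vsub a (vec_of p)) < rr m" using l2_dense_rat[OF DM_l2[OF a] rpos] by blast
  obtain q where q: "vnorm (vsub (M a) (vec_of q)) < rr m" using l2_dense_rat[OF M_l2[OF a] rpos] by blast
  define j where "j = (p, q, m)"
  have ex: "\<exists>x. pcond j x" using a p q by (auto simp: pcond_def j_def)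
  have pj: "pcond j (pick j)" unfolding pick_def using ex someI_ex[OF ex] by simp
  define x where "x = pick j"
  have x: "x \<in> DM" "vnorm (vsub x (vec_of p)) < rr m" "vnorm (vsub (M x) (vec_of q)) < rr m"
    using pj by (auto simp: pcond_def x_def j_def)
  have "vnorm (vsub x a) \<le> vnorm (vsub x (vec_of p)) + vnorm (vsub (vec_of p) a)"
    using x a by (intro vnorm_sub_triangle) (auto simp: DM_l2 vec_of_l2)
  also have "\<dots> < \<epsilon>" using x(2) p rm vnorm_sub_sym[of "vec_of p" a] by linarith
  finally have 1: "vnorm (vsub x a) < \<epsilon>" .
  have "vnorm (vsub (M x) (M a)) \<le> vnorm (vsub (M x) (vec_of q)) + vnorm (vsub (vec_of q) (M a))"
    using x a by (intro vnorm_sub_triangle) (auto simp: M_l2 vec_of_l2)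
  also have "\<dots> < \<epsilon>" using x(3) q rm vnorm_sub_sym[of "vec_of q" "M a"] by linarith
  finally have 2: "vnorm (vsub (M x) (M a)) < \<epsilon>" .
  have "dseq (to_nat j) = x" by (simp add: dseq_def x_def)
  thus ?thesis using 1 2 by metis
qed

section \<open>Gram-Schmidt\<close>

lemma lc_cong: "(\<And>j. j < n \<Longrightarrow> c j = c' j) \<Longrightarrow> (\<And>j. j < n \<Longrightarrow> h j = h' j) \<Longrightarrow> lc n c h = lc n c' h'"
  unfolding lc_def by (intro ext sum.cong) auto

definition gs_step :: "nat \<Rightarrow> (nat \<Rightarrow> 'i vec) \<Rightarrow> 'i vec" where
  "gs_step n h = (let u = vsub (dseq n) (lc n (\<lambda>j. inner_l2 (h j) (dseq n)) h) in
     if vnorm u = 0 then vzero else smult (complex_of_real (1 / vnorm u)) u)"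

lemma gs_step_cong: "(\<And>j. j < n \<Longrightarrow> h j = h' j) \<Longrightarrow> gs_step n h = gs_step n h'"
proof -
  assume h: "\<And>j. j < n \<Longrightarrow> h j = h' j"
  have "lc n (\<lambda>j. inner_l2 (h j) (dseq n)) h = lc n (\<lambda>j. inner_l2 (h' j) (dseq n)) h'"
    by (rule lc_cong) (simp_all add: h)
  thus ?thesis unfolding gs_step_def by simp
qed

primrec GG :: "nat \<Rightarrow> nat \<Rightarrow> 'i vec" where
  "GG 0 = (\<lambda>_. vzero)"
| "GG (Suc n) = (GG n)(n := gs_step n (GG n))"

definition g :: "nat \<Rightarrow> 'i vec" where "g n = GG (Suc n) n"

lemma GG_stable: "j < n \<Longrightarrow> GG n j = g j"
proof (induction n)
  case (Suc n)
  thus ?case by (cases "j = n") (auto simp: g_def)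
qed simp

lemma g_eq: "g n = gs_step n g"
proof -
  have "g n = gs_step n (GG n)" by (simp add: g_def)
  also have "\<dots> = gs_step n g" by (rule gs_step_cong) (simp add: GG_stable)
  finally show ?thesis .
qed

definition cc :: "nat \<Rightarrow> nat \<Rightarrow> complex" where "cc n j = inner_l2 (g j) (dseq n)"
definition uu :: "nat \<Rightarrow> 'i vec" where "uu n = vsub (dseq n) (lc n (cc n) g)"

lemma g_uu: "g n = (if vnorm (uu n) = 0 then vzero else smult (complex_of_real (1 / vnorm (uu n))) (uu n))"
  by (subst g_eq) (simp add: gs_step_def uu_def cc_def[abs_def] Let_def)

lemma lc_DM: "(\<And>k. k < n \<Longrightarrow> e k \<in> DM) \<Longrightarrow> lc n c e \<in> DM"
proof (induction n)
  case 0 thus ?case by (simp add: DM_vzero)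
next
  case (Suc n) thus ?case by (simp add: lc_Suc DM_vadd DM_smult)
qed

lemma g_inv: "g n \<in> DM \<and> (g n \<noteq> vzero \<longrightarrow> inner_l2 (g n) (g n) = 1) \<and> (\<forall>j<n. inner_l2 (g j) (g n) = 0)"
proof (induction n rule: less_induct)
  case (less n)
  have gDM: "\<And>k. k < n \<Longrightarrow> g k \<in> DM" using less by blast
  have gl2: "\<And>k. k < n \<Longrightarrow> g k \<in> l2" using gDM DM_l2 by blast
  have orth: "\<And>j k. j < n \<Longrightarrow> k < n \<Longrightarrow> j \<noteq> k \<Longrightarrow> inner_l2 (g k) (g j) = 0"
  proof -
    fix j k assume jk: "j < n" "k < n" "j \<noteq> k"
    show "inner_l2 (g k) (g j) = 0"
    proof (cases "k < j")
      case True thus ?thesis using less jk by blast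
    next
      case False
      hence "j < k" using jk by simp
      hence "inner_l2 (g j) (g k) = 0" using less jk by blast
      thus ?thesis by (subst inner_cnj) simp
    qed
  qed
  have LDM: "lc n (cc n) g \<in> DM" by (rule lc_DM[OF gDM])
  have uDM: "uu n \<in> DM" unfolding uu_def by (rule DM_vsub[OF dseq_DM LDM])
  have ul2: "uu n \<in> l2" by (rule DM_l2[OF uDM])
  have ou: "inner_l2 (g k) (uu n) = 0" if k: "k < n" for k
  proof -
    have "inner_l2 (g k) (lc n (cc n) g) = (\<Sum>j<n. cc n j * inner_l2 (g k) (g j))"
      using gl2 k by (intro inner_lc_right) auto
    also have "\<dots> = (\<Sum>j<n. if j = k then cc n k * inner_l2 (g k) (g k) else 0)"
      using orth k by (intro sum.cong) auto
    also have "\<dots> = cc n k * inner_l2 (g k) (g k)" using k by simp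
    also have "\<dots> = cc n k"
    proof (cases "g k = vzero")
      case True thus ?thesis by (simp add: cc_def)
    next
      case False thus ?thesis using less k by simp
    qed
    finally have "inner_l2 (g k) (lc n (cc n) g) = cc n k" .
    thus ?thesis unfolding uu_def using gl2 k dseq_l2 DM_l2[OF LDM]
      by (simp add: inner_sub_right cc_def)
  qed
  show ?case
  proof (cases "vnorm (uu n) = 0")
    case True
    thus ?thesis using g_uu[of n] by (simp add: DM_vzero)
  next
    case False
    hence gn: "g n = smult (complex_of_real (1 / vnorm (uu n))) (uu n)" using g_uu[of n] by simp
    have pos: "vnorm (uu n) > 0" using False vnorm_nonneg[of "uu n"] by linarith
    have "vnorm (g n) = 1" unfolding gn vnorm_smult using pos by (simp add: norm_divide)
    hence "inner_l2 (g n) (g n) = 1" using inner_self[of "g n"] ul2 gn by simp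
    moreover have "g n \<in> DM" unfolding gn by (rule DM_smult[OF uDM])
    moreover have "\<forall>j<n. inner_l2 (g j) (g n) = 0" unfolding gn by (simp add: inner_smult_right ou)
    ultimately show ?thesis by simp
  qed
qed

lemma g_DM: "g n \<in> DM" using g_inv by blast
lemma g_l2: "g n \<in> l2" using g_DM DM_l2 by blast
lemma g_norm: "g n \<noteq> vzero \<Longrightarrow> inner_l2 (g n) (g n) = 1" using g_inv by blast
lemma g_orth: "j \<noteq> k \<Longrightarrow> inner_l2 (g j) (g k) = 0"
proof (cases "j < k")
  case True thus ?thesis using g_inv by blast
next
  case False
  assume "j \<noteq> k"
  hence "k < j" using False by simp
  hence "inner_l2 (g k) (g j) = 0" using g_inv by blast
  thus ?thesis by (subst inner_cnj) simp
qed

lemma dseq_lc: "\<exists>c. dseq n = lc (Suc n) c g"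
proof -
  have LDM: "lc n (cc n) g \<in> DM" by (rule lc_DM[OF g_DM])
  have dec: "dseq n = vadd (lc n (cc n) g) (uu n)" by (simp add: uu_def vadd_def vsub_def fun_eq_iff)
  show ?thesis
  proof (cases "vnorm (uu n) = 0")
    case True
    have ul2: "uu n \<in> l2" unfolding uu_def by (rule DM_l2[OF DM_vsub[OF dseq_DM LDM]])
    have "uu n = vzero" by (rule vnorm_zero[OF ul2 True])
    hence "dseq n = lc (Suc n) ((cc n)(n := 0)) g"
      unfolding dec lc_Suc by (simp add: vadd_def smult_def vzero_def fun_eq_iff lc_def)
    thus ?thesis by blast
  next
    case False
    hence gn: "g n = smult (complex_of_real (1 / vnorm (uu n))) (uu n)" using g_uu[of n] by simp
    have "uu n = smult (complex_of_real (vnorm (uu n))) (g n)"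
      unfolding gn using False by (simp add: smult_def fun_eq_iff)
    hence "dseq n = lc (Suc n) ((cc n)(n := complex_of_real (vnorm (uu n)))) g"
      unfolding dec lc_Suc by (simp add: vadd_def smult_def fun_eq_iff lc_def)
    thus ?thesis by blast
  qed
qed

end



context gsf_loc
begin

definition Eb :: "'i vec set" where "Eb = {e. \<exists>n. e = g n \<and> e \<noteq> vzero}"

lemma Eb_DM: "Eb \<subseteq> DM" unfolding Eb_def using g_DM by blast

lemma Eb_orth: assumes "e \<in> Eb" "e' \<in> Eb" shows "inner_l2 e e' = (if e = e' then 1 else 0)"
proof -
  obtain j where j: "e = g j" "g j \<noteq> vzero" using assms(1) unfolding Eb_def by blast
  obtain k where k: "e' = g k" "g k \<noteq> vzero" using assms(2) unfolding Eb_def by blast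
  show ?thesis
  proof (cases "j = k")
    case True
    hence "e = e'" using j k by simp
    moreover have "inner_l2 e e = 1" using g_norm[OF j(2)] j(1) by simp
    ultimately show ?thesis by simp
  next
    case False
    hence o: "inner_l2 e e' = 0" using j k g_orth by simp
    have "e \<noteq> e'"
    proof
      assume ee: "e = e'"
      have "inner_l2 e e = 1" using g_norm[OF j(2)] j(1) by simp
      hence "inner_l2 e e' = 1" using ee by simp
      thus False using o by simp
    qed
    thus ?thesis using o by simp
  qed
qed

lemma lspan_lc: "lspan E = {lc n c e | n c e. \<forall>k<n. e k \<in> E}"
  by (simp add: lspan_def lc_def)

lemma lspan_DM: "lspan Eb \<subseteq> DM"
  unfolding lspan_lc using Eb_DM by (auto intro!: lc_DM)

lemma lc_g_lspan: "lc n c g \<in> lspan Eb"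
proof (cases "Eb = {}")
  case True
  hence z: "\<And>j. g j = vzero" unfolding Eb_def by blast
  have "lc n c g = lc 0 c g" by (simp add: lc_def z vzero_def fun_eq_iff)
  thus ?thesis unfolding lspan_lc by blast
next
  case False
  then obtain e0 where e0: "e0 \<in> Eb" by blast
  define e' where "e' j = (if g j = vzero then e0 else g j)" for j
  define c' where "c' j = (if g j = vzero then 0 else c j)" for j
  have "lc n c g = lc n c' e'"
    unfolding lc_def by (intro ext sum.cong refl) (auto simp: e'_def c'_def vzero_def)
  moreover have "\<forall>k<n. e' k \<in> Eb" using e0 by (auto simp: e'_def Eb_def)
  ultimately show ?thesis unfolding lspan_lc by blast
qed

lemma dseq_lspan: "dseq n \<in> lspan Eb"
  using dseq_lc[of n] lc_g_lspan by metis

lemma Eb_onb: "orthonormal_basis Eb"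
  unfolding orthonormal_basis_def
proof (intro conjI ballI impI)
  show "Eb \<subseteq> l2" using Eb_DM DM_l2 by blast
next
  fix e e' assume "e \<in> Eb" "e' \<in> Eb" thus "inner_l2 e e' = (if e = e' then 1 else 0)" by (rule Eb_orth)
next
  fix x assume x: "x \<in> l2" and perp: "\<forall>e\<in>Eb. inner_l2 e x = 0"
  have pg: "inner_l2 (g n) x = 0" for n
    using perp by (cases "g n = vzero") (auto simp: Eb_def)
  have pd: "inner_l2 (dseq n) x = 0" for n
  proof -
    obtain c where c: "dseq n = lc (Suc n) c g" using dseq_lc by blast
    show ?thesis unfolding c using x g_l2 by (simp add: inner_lc_left pg)
  qed
  show "x = vzero"
  proof (rule ccontr)
    assume "x \<noteq> vzero"
    hence nz: "vnorm x \<noteq> 0" using vnorm_zero x by blast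
    hence pos: "vnorm x > 0" using vnorm_nonneg[of x] by linarith
    have pos2: "vnorm x / 2 > 0" using pos by simp
    obtain a where a: "a \<in> DM" "vnorm (vsub x a) < vnorm x / 2"
      using gsf_dense x pos2 unfolding densely_defined_def by blast
    obtain n where n: "vnorm (vsub (dseq n) a) < vnorm x / 2"
      using dseq_dense[OF a(1) pos2] by blast
    have "vnorm (vsub x (dseq n)) \<le> vnorm (vsub x a) + vnorm (vsub a (dseq n))"
      using x a dseq_l2 by (intro vnorm_sub_triangle) (auto simp: DM_l2)
    also have "\<dots> < vnorm x" using a(2) n vnorm_sub_sym[of a "dseq n"] by linarith
    finally have close: "vnorm (vsub x (dseq n)) < vnorm x" .
    have "inner_l2 x x = inner_l2 (vsub x (dseq n)) x + inner_l2 (dseq n) x"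
      using x dseq_l2 by (simp add: inner_sub_left)
    hence "inner_l2 x x = inner_l2 (vsub x (dseq n)) x" using pd by simp
    hence "cmod (inner_l2 x x) \<le> vnorm (vsub x (dseq n)) * vnorm x"
      using inner_cs[of "vsub x (dseq n)" x] x dseq_l2 by simp
    moreover have "cmod (inner_l2 x x) = vnorm x * vnorm x"
      using inner_self[OF x] by (simp add: power2_eq_square norm_mult)
    ultimately have "vnorm x * vnorm x \<le> vnorm (vsub x (dseq n)) * vnorm x" by simp
    hence "vnorm x \<le> vnorm (vsub x (dseq n))" using pos by simp
    thus False using close by linarith
  qed
qed

lemma Eb_core: "is_core_op DM M (lspan Eb)"
  unfolding is_core_op_def
proof (intro conjI ballI)
  show "lspan Eb \<subseteq> DM" by (rule lspan_DM)
next
  fix x assume x: "x \<in> DM"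
  define N where "N m = (SOME n. vnorm (vsub (dseq n) x) < rr m \<and> vnorm (vsub (M (dseq n)) (M x)) < rr m)" for m
  have Nm: "vnorm (vsub (dseq (N m)) x) < rr m \<and> vnorm (vsub (M (dseq (N m))) (M x)) < rr m" for m
  proof -
    have "rr m > 0" by (simp add: rr_def)
    from dseq_dense[OF x this] show ?thesis unfolding N_def by (rule someI_ex)
  qed
  have rr0: "rr \<longlonglongrightarrow> 0" unfolding rr_def[abs_def] by (rule LIMSEQ_inverse_real_of_nat)
  have "(\<lambda>m. vnorm (vsub (dseq (N m)) x)) \<longlonglongrightarrow> 0"
    by (rule tendsto_sandwich[OF always_eventually always_eventually tendsto_const rr0]) (use Nm in \<open>auto intro: less_imp_le\<close>)
  moreover have "(\<lambda>m. vnorm (vsub (M (dseq (N m))) (M x))) \<longlonglongrightarrow> 0"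
    by (rule tendsto_sandwich[OF always_eventually always_eventually tendsto_const rr0]) (use Nm in \<open>auto intro: less_imp_le\<close>)
  moreover have "\<forall>m. dseq (N m) \<in> lspan Eb" by (simp add: dseq_lspan)
  ultimately show "\<exists>y. (\<forall>n. y n \<in> lspan Eb) \<and> (\<lambda>n. vnorm (vsub (y n) x)) \<longlonglongrightarrow> 0 \<and>
      (\<lambda>n. vnorm (vsub (M (y n)) (M x))) \<longlonglongrightarrow> 0" by (intro exI[of _ "\<lambda>m. dseq (N m)"] conjI) auto
qed

end



lemma lspan_lc': "lspan E = {lc n c e | n c e. \<forall>k<n. e k \<in> E}"
  by (simp add: lspan_def lc_def)

lemma opsum_cong: "(\<And>k. k < n \<Longrightarrow> F k = G k) \<Longrightarrow> opsum n F = opsum n G"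
  unfolding opsum_def by (intro ext sum.cong) auto

lemma opadd_opzero[simp]: "opadd A opzero = A" by (simp add: opadd_def opzero_def vadd_def vzero_def)

lemma opsum_append: "opadd (opsum n F) (opsum m G) = opsum (n+m) (\<lambda>k. if k < n then F k else G (k - n))"
proof (induction m)
  case 0
  show ?case by simp (rule opsum_cong, simp)
next
  case (Suc m)
  have "opsum (n + Suc m) (\<lambda>k. if k < n then F k else G (k - n))
     = opadd (opsum (n+m) (\<lambda>k. if k < n then F k else G (k - n))) (G m)"
    by (simp add: opsum_Suc)
  also have "\<dots> = opadd (opadd (opsum n F) (opsum m G)) (G m)" by (simp add: Suc)
  also have "\<dots> = opadd (opsum n F) (opsum (Suc m) G)"
    by (simp add: opsum_Suc opadd_def vadd_def fun_eq_iff add.assoc)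
  finally show ?case by simp
qed

lemma lspan2_zero: "opzero \<in> lspan2 E"
  unfolding lspan2_def by (rule CollectI, rule exI[of _ 0]) auto

lemma lspan2_add: assumes "p \<in> lspan2 E" "q \<in> lspan2 E" shows "opadd p q \<in> lspan2 E"
proof -
  obtain n c a b where p: "p = opsum n (\<lambda>k. opscale (c k) (ketbra (a k) (b k)))" "\<forall>k<n. a k \<in> E \<and> b k \<in> E"
    using assms(1) unfolding lspan2_def by blast
  obtain m d a' b' where q: "q = opsum m (\<lambda>k. opscale (d k) (ketbra (a' k) (b' k)))" "\<forall>k<m. a' k \<in> E \<and> b' k \<in> E"
    using assms(2) unfolding lspan2_def by blast
  define C where "C k = (if k < n then c k else d (k - n))" for k
  define A where "A k = (if k < n then a k else a' (k - n))" for k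
  define B where "B k = (if k < n then b k else b' (k - n))" for k
  have "opadd p q = opsum (n+m) (\<lambda>k. opscale (C k) (ketbra (A k) (B k)))"
    unfolding p q opsum_append by (rule opsum_cong) (simp add: A_def B_def C_def)
  moreover have "\<forall>k<n+m. A k \<in> E \<and> B k \<in> E" using p(2) q(2) by (auto simp: A_def B_def)
  ultimately show ?thesis unfolding lspan2_def by blast
qed

lemma lspan2_scale: assumes "p \<in> lspan2 E" shows "opscale z p \<in> lspan2 E"
proof -
  obtain n c a b where p: "p = opsum n (\<lambda>k. opscale (c k) (ketbra (a k) (b k)))" "\<forall>k<n. a k \<in> E \<and> b k \<in> E"
    using assms(1) unfolding lspan2_def by blast
  have "opscale z p = opsum n (\<lambda>k. opscale (z * c k) (ketbra (a k) (b k)))"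
    unfolding p by (simp add: opscale_def opsum_def smult_def fun_eq_iff sum_distrib_left mult.assoc)
  thus ?thesis using p(2) unfolding lspan2_def
    by (intro CollectI exI[of _ n] exI[of _ "\<lambda>k. z * c k"] exI[of _ a] exI[of _ b] conjI) auto
qed

lemma lspan2_opsum: "(\<And>k. k < n \<Longrightarrow> F k \<in> lspan2 E) \<Longrightarrow> opsum n F \<in> lspan2 E"
  by (induction n) (auto simp: lspan2_zero opsum_Suc intro!: lspan2_add)

lemma ketbra_lc_left: "ketbra (lc n c e) \<beta> = opsum n (\<lambda>k. opscale (c k) (ketbra (e k) \<beta>))"
  by (simp add: ketbra_def lc_def opsum_def opscale_def smult_def vzero_def fun_eq_iff sum_distrib_left mult.left_commute)

lemma ketbra_lc_right: fixes f :: "nat \<Rightarrow> ('i::countable) vec"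
  assumes "\<And>j. j < m \<Longrightarrow> f j \<in> l2"
  shows "ketbra \<alpha> (lc m d f) = opsum m (\<lambda>j. opscale (cnj (d j)) (ketbra \<alpha> (f j)))"
proof (intro ext)
  fix x i
  show "ketbra \<alpha> (lc m d f) x i = opsum m (\<lambda>j. opscale (cnj (d j)) (ketbra \<alpha> (f j))) x i"
  proof (cases "x \<in> l2")
    case True
    hence "inner_l2 (lc m d f) x = (\<Sum>j<m. cnj (d j) * inner_l2 (f j) x)" using assms by (simp add: inner_lc_left)
    thus ?thesis using True by (simp add: ketbra_def opsum_def opscale_def smult_def sum_distrib_right mult.assoc)
  qed (simp add: ketbra_def opsum_def opscale_def smult_def vzero_def)
qed

lemma ketbra_lspan: fixes E :: "('i::countable) vec set"
  assumes El2: "E \<subseteq> l2" and \<alpha>: "\<alpha> \<in> lspan E" and \<beta>: "\<beta> \<in> lspan E" shows "ketbra \<alpha> \<beta> \<in> lspan2 E"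
proof -
  obtain n c e where a: "\<alpha> = lc n c e" "\<forall>k<n. e k \<in> E" using \<alpha> unfolding lspan_lc' by blast
  obtain m d f where b: "\<beta> = lc m d f" "\<forall>k<m. f k \<in> E" using \<beta> unfolding lspan_lc' by blast
  have fl2: "\<And>j. j < m \<Longrightarrow> f j \<in> l2" using b(2) El2 by blast
  have "ketbra \<alpha> \<beta> = opsum n (\<lambda>k. opscale (c k) (opsum m (\<lambda>j. opscale (cnj (d j)) (ketbra (e k) (f j)))))"
    unfolding a(1) ketbra_lc_left b(1) by (rule opsum_cong) (simp only: ketbra_lc_right[OF fl2])
  also have "\<dots> \<in> lspan2 E"
  proof (rule lspan2_opsum, rule lspan2_scale)
    fix k assume k: "k < n"
    show "opsum m (\<lambda>j. opscale (cnj (d j)) (ketbra (e k) (f j))) \<in> lspan2 E"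
      unfolding lspan2_def using a(2) b(2) k
      by (intro CollectI exI[of _ m] exI[of _ "\<lambda>j. cnj (d j)"] exI[of _ "\<lambda>j. e k"] exI[of _ f] conjI) auto
  qed
  finally show ?thesis .
qed



lemma norm_conv: assumes "(\<lambda>m. vnorm (vsub (z m) b)) \<longlonglongrightarrow> 0" "\<And>m. z m \<in> l2" "b \<in> l2"
  shows "(\<lambda>m. vnorm (z m)) \<longlonglongrightarrow> vnorm b"
proof -
  have "(\<lambda>m. \<bar>vnorm (z m) - vnorm b\<bar>) \<longlonglongrightarrow> 0"
    by (rule tendsto_sandwich[OF always_eventually always_eventually tendsto_const assms(1)])
       (use vnorm_diff_le assms(2,3) in auto)
  hence "(\<lambda>m. vnorm (z m) - vnorm b) \<longlonglongrightarrow> 0" by (simp add: tendsto_rabs_zero_iff)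
  thus ?thesis by (rule LIM_zero_cancel)
qed

lemma opsub_opadd2: "opsub (opadd A B) (opadd C D) = opadd (opsub A C) (opsub B D)"
  by (simp add: opsub_def opadd_def vsub_def vadd_def fun_eq_iff)

locale gsf_qds = gsf_loc +
  assumes tqds: "tp_qds T"
begin

lemma gen_lspan2: assumes "q \<in> lspan2 Eb" shows "\<exists>s. gen T q s"
proof -
  obtain n c a b where q: "q = opsum n (\<lambda>k. opscale (c k) (ketbra (a k) (b k)))" "\<forall>k<n. a k \<in> Eb \<and> b k \<in> Eb"
    using assms unfolding lspan2_def by blast
  have "\<forall>k<n. a k \<in> DM \<and> b k \<in> DM" using q(2) Eb_DM by blast
  hence "\<exists>s. gen T (opsum n (\<lambda>k. opscale (c k) (ketbra (a k) (b k)))) s"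
  proof (induction n)
    case 0 thus ?case using gen_opzero[OF tqds] by auto
  next
    case (Suc n)
    then obtain s where s: "gen T (opsum n (\<lambda>k. opscale (c k) (ketbra (a k) (b k)))) s" by auto
    have ab: "a n \<in> DM" "b n \<in> DM" using Suc.prems by auto
    have "gen T (opadd (opsum n (\<lambda>k. opscale (c k) (ketbra (a k) (b k)))) (opscale (c n) (ketbra (a n) (b n))))
        (opadd s (opscale (c n) (sig (a n) (b n))))"
      by (rule gen_lin[OF tqds s sig_prop(1)[OF ab]])
    thus ?case by (auto simp: opsum_Suc)
  qed
  thus ?thesis using q by simp
qed

lemma KB_approx: assumes a: "a \<in> DM" and b: "b \<in> DM" and e: "\<epsilon> > 0"
  shows "\<exists>\<alpha> \<beta>. \<alpha> \<in> lspan Eb \<and> \<beta> \<in> lspan Eb \<and> tnorm (opsub (ketbra \<alpha> \<beta>) (ketbra a b)) \<le> ennreal \<epsilon>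
     \<and> tnorm (opsub (sig \<alpha> \<beta>) (sig a b)) \<le> ennreal \<epsilon>"
proof -
  obtain y where y: "\<And>n. y n \<in> lspan Eb" "(\<lambda>n. vnorm (vsub (y n) a)) \<longlonglongrightarrow> 0" "(\<lambda>n. vnorm (vsub (M (y n)) (M a))) \<longlonglongrightarrow> 0"
    using Eb_core a unfolding is_core_op_def by blast
  obtain z where z: "\<And>n. z n \<in> lspan Eb" "(\<lambda>n. vnorm (vsub (z n) b)) \<longlonglongrightarrow> 0" "(\<lambda>n. vnorm (vsub (M (z n)) (M b))) \<longlonglongrightarrow> 0"
    using Eb_core b unfolding is_core_op_def by blast
  have yD: "\<And>n. y n \<in> DM" and zD: "\<And>n. z n \<in> DM" using y(1) z(1) lspan_DM by auto
  have nz: "(\<lambda>n. vnorm (z n)) \<longlonglongrightarrow> vnorm b" by (rule norm_conv[OF z(2)]) (auto simp: zD DM_l2 b)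
  have nMz: "(\<lambda>n. vnorm (M (z n))) \<longlonglongrightarrow> vnorm (M b)" by (rule norm_conv[OF z(3)]) (auto simp: zD M_l2 b)
  define B1 where "B1 n = vnorm (vsub (y n) a) * vnorm (z n) + vnorm a * vnorm (vsub (z n) b)" for n
  define B2 where "B2 n = PB (y n) (z n) a b + KB (y n) (z n) a b" for n
  have l1: "B1 \<longlonglongrightarrow> 0 * vnorm b + vnorm a * 0"
    unfolding B1_def[abs_def] by (intro tendsto_add tendsto_mult y(2) z(2) nz tendsto_const)
  have l2: "B2 \<longlonglongrightarrow> (sqrt (2 * (0 * 0)) * sqrt (2 * (vnorm b * vnorm (M b))) + sqrt (2 * (vnorm a * vnorm (M a))) * sqrt (2 * (0 * 0)))
      + (0 * vnorm b + vnorm (M a) * 0 + (0 * vnorm (M b) + vnorm a * 0))"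
    unfolding B2_def[abs_def] PB_def KB_def
    by (intro tendsto_add tendsto_mult tendsto_real_sqrt y(2) y(3) z(2) z(3) nz nMz tendsto_const)
  have "eventually (\<lambda>n. B1 n < \<epsilon>) sequentially" using order_tendstoD(2)[OF l1] e by simp
  moreover have "eventually (\<lambda>n. B2 n < \<epsilon>) sequentially" using order_tendstoD(2)[OF l2] e by simp
  ultimately have "eventually (\<lambda>n. B1 n < \<epsilon> \<and> B2 n < \<epsilon>) sequentially" by (rule eventually_conj)
  then obtain N where N: "B1 N < \<epsilon>" "B2 N < \<epsilon>" unfolding eventually_sequentially by blast
  have "tnorm (opsub (ketbra (y N) (z N)) (ketbra a b)) \<le> ennreal (B1 N)"
    unfolding B1_def using yD zD a b by (intro tnorm_ketbra_diff) (auto simp: DM_l2)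
  also have "\<dots> \<le> ennreal \<epsilon>" using N by (intro ennreal_leI) simp
  finally have 1: "tnorm (opsub (ketbra (y N) (z N)) (ketbra a b)) \<le> ennreal \<epsilon>" .
  have "tnorm (opsub (sig (y N) (z N)) (sig a b)) \<le> ennreal (B2 N)"
    unfolding B2_def by (rule sig_diff[OF yD zD a b])
  also have "\<dots> \<le> ennreal \<epsilon>" using N by (intro ennreal_leI) simp
  finally have 2: "tnorm (opsub (sig (y N) (z N)) (sig a b)) \<le> ennreal \<epsilon>" .
  show ?thesis using 1 2 y(1) z(1) by blast
qed

lemma approx_D0:
  assumes ab: "\<forall>k<m. a k \<in> DM \<and> b k \<in> DM"
  shows "gen T (opsum m (\<lambda>k. ketbra (a k) (b k))) (opsum m (\<lambda>k. sig (a k) (b k))) \<and>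
    (\<forall>\<epsilon>>0. \<exists>q s. q \<in> lspan2 Eb \<and> gen T q s \<and> tnorm (opsub q (opsum m (\<lambda>k. ketbra (a k) (b k)))) \<le> ennreal \<epsilon>
       \<and> tnorm (opsub s (opsum m (\<lambda>k. sig (a k) (b k)))) \<le> ennreal \<epsilon>)"
  using ab
proof (induction m)
  case 0
  have "opsub opzero opzero = (opzero :: 'a op)" by (simp add: opsub_def opzero_def vsub_def vzero_def)
  hence eq: "opsub opzero opzero = (opzero :: 'a op)" .
  show ?case
  proof (intro conjI allI impI)
    show "gen T (opsum 0 (\<lambda>k. ketbra (a k) (b k))) (opsum 0 (\<lambda>k. sig (a k) (b k)))"
      using gen_opzero[OF tqds] by simp
    fix \<epsilon> :: real assume "\<epsilon> > 0"
    show "\<exists>q s. q \<in> lspan2 Eb \<and> gen T q s \<and> tnorm (opsub q (opsum 0 (\<lambda>k. ketbra (a k) (b k)))) \<le> ennreal \<epsilon>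
       \<and> tnorm (opsub s (opsum 0 (\<lambda>k. sig (a k) (b k)))) \<le> ennreal \<epsilon>"
      by (intro exI[of _ opzero] conjI lspan2_zero gen_opzero[OF tqds]) (simp_all add: eq)
  qed
next
  case (Suc m)
  have abm: "a m \<in> DM" "b m \<in> DM" using Suc.prems by auto
  have IH: "gen T (opsum m (\<lambda>k. ketbra (a k) (b k))) (opsum m (\<lambda>k. sig (a k) (b k)))"
    "\<And>\<epsilon>. \<epsilon> > 0 \<Longrightarrow> \<exists>q s. q \<in> lspan2 Eb \<and> gen T q s \<and> tnorm (opsub q (opsum m (\<lambda>k. ketbra (a k) (b k)))) \<le> ennreal \<epsilon>
       \<and> tnorm (opsub s (opsum m (\<lambda>k. sig (a k) (b k)))) \<le> ennreal \<epsilon>"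
    using Suc by auto
  define R where "R = opsum m (\<lambda>k. ketbra (a k) (b k))"
  define S where "S = opsum m (\<lambda>k. sig (a k) (b k))"
  have gRS: "gen T R S" using IH(1) by (simp add: R_def S_def)
  have g1: "gen T (opsum (Suc m) (\<lambda>k. ketbra (a k) (b k))) (opsum (Suc m) (\<lambda>k. sig (a k) (b k)))"
    unfolding opsum_Suc by (rule gen_add[OF tqds IH(1) sig_prop(1)[OF abm]])
  have "\<exists>q s. q \<in> lspan2 Eb \<and> gen T q s \<and> tnorm (opsub q (opsum (Suc m) (\<lambda>k. ketbra (a k) (b k)))) \<le> ennreal \<epsilon>
       \<and> tnorm (opsub s (opsum (Suc m) (\<lambda>k. sig (a k) (b k)))) \<le> ennreal \<epsilon>" if e: "\<epsilon> > 0" for \<epsilon>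
  proof -
    have e2: "\<epsilon>/2 > 0" using e by simp
    obtain q1 s1 where q1: "q1 \<in> lspan2 Eb" "gen T q1 s1" "tnorm (opsub q1 R) \<le> ennreal (\<epsilon>/2)"
      "tnorm (opsub s1 S) \<le> ennreal (\<epsilon>/2)" using IH(2)[OF e2] unfolding R_def S_def by blast
    obtain \<alpha> \<beta> where ab: "\<alpha> \<in> lspan Eb" "\<beta> \<in> lspan Eb" "tnorm (opsub (ketbra \<alpha> \<beta>) (ketbra (a m) (b m))) \<le> ennreal (\<epsilon>/2)"
      "tnorm (opsub (sig \<alpha> \<beta>) (sig (a m) (b m))) \<le> ennreal (\<epsilon>/2)" using KB_approx[OF abm e2] by blast
    have abD: "\<alpha> \<in> DM" "\<beta> \<in> DM" using ab(1,2) lspan_DM by auto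
    have El2: "Eb \<subseteq> l2" using Eb_DM DM_l2 by blast
    define q where "q = opadd q1 (ketbra \<alpha> \<beta>)"
    define s where "s = opadd s1 (sig \<alpha> \<beta>)"
    have qL: "q \<in> lspan2 Eb" unfolding q_def by (intro lspan2_add q1(1) ketbra_lspan[OF El2 ab(1,2)])
    have gq: "gen T q s" unfolding q_def s_def by (rule gen_add[OF tqds q1(2) sig_prop(1)[OF abD]])
    have tc: "trace_class q1" "trace_class s1" "trace_class R" "trace_class S"
      "trace_class (sig \<alpha> \<beta>)" "trace_class (sig (a m) (b m))"
      using q1(2) gRS sig_prop(1)[OF abD] sig_prop(1)[OF abm] by (auto simp: gen_def)
    have ml: "ml2 (ketbra \<alpha> \<beta>)" "ml2 (ketbra (a m) (b m))" using abD abm by (auto simp: DM_l2)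
    have "tnorm (opsub q (opsum (Suc m) (\<lambda>k. ketbra (a k) (b k)))) = tnorm (opadd (opsub q1 R) (opsub (ketbra \<alpha> \<beta>) (ketbra (a m) (b m))))"
      unfolding q_def opsum_Suc R_def opsub_opadd2 ..
    also have "\<dots> \<le> tnorm (opsub q1 R) + tnorm (opsub (ketbra \<alpha> \<beta>) (ketbra (a m) (b m)))"
      using tc ml by (intro tnorm_opadd ml2_opsub) (auto simp: tc_ml2)
    also have "\<dots> \<le> ennreal (\<epsilon>/2) + ennreal (\<epsilon>/2)" using q1(3) ab(3) by (rule add_mono)
    also have "\<dots> = ennreal \<epsilon>" using e by (simp add: ennreal_plus[symmetric] del: ennreal_plus)
    finally have 1: "tnorm (opsub q (opsum (Suc m) (\<lambda>k. ketbra (a k) (b k)))) \<le> ennreal \<epsilon>" .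
    have "tnorm (opsub s (opsum (Suc m) (\<lambda>k. sig (a k) (b k)))) = tnorm (opadd (opsub s1 S) (opsub (sig \<alpha> \<beta>) (sig (a m) (b m))))"
      unfolding s_def opsum_Suc S_def opsub_opadd2 ..
    also have "\<dots> \<le> tnorm (opsub s1 S) + tnorm (opsub (sig \<alpha> \<beta>) (sig (a m) (b m)))"
      using tc by (intro tnorm_opadd ml2_opsub) (auto simp: tc_ml2)
    also have "\<dots> \<le> ennreal (\<epsilon>/2) + ennreal (\<epsilon>/2)" using q1(4) ab(4) by (rule add_mono)
    also have "\<dots> = ennreal \<epsilon>" using e by (simp add: ennreal_plus[symmetric] del: ennreal_plus)
    finally have 2: "tnorm (opsub s (opsum (Suc m) (\<lambda>k. sig (a k) (b k)))) \<le> ennreal \<epsilon>" .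
    show ?thesis using qL gq 1 2 by blast
  qed
  thus ?case using g1 by blast
qed

end



context gsf_qds
begin

lemma approx_gen: assumes r: "r \<in> D0 DM" and g: "gen T r s" and e: "\<epsilon> > 0"
  shows "\<exists>q s'. q \<in> lspan2 Eb \<and> gen T q s' \<and> tnorm (opsub q r) \<le> ennreal \<epsilon> \<and> tnorm (opsub s' s) \<le> ennreal \<epsilon>"
proof -
  obtain m a b where rr: "r = opsum m (\<lambda>k. ketbra (a k) (b k))" "\<forall>k<m. a k \<in> DM \<and> b k \<in> DM"
    using r unfolding D0_def by blast
  define S0 where "S0 = opsum m (\<lambda>k. sig (a k) (b k))"
  have A: "gen T r S0" "\<exists>q s'. q \<in> lspan2 Eb \<and> gen T q s' \<and> tnorm (opsub q r) \<le> ennreal \<epsilon> \<and> tnorm (opsub s' S0) \<le> ennreal \<epsilon>"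
    using approx_D0[OF rr(2)] e unfolding rr(1) S0_def by blast+
  obtain q s' where q: "q \<in> lspan2 Eb" "gen T q s'" "tnorm (opsub q r) \<le> ennreal \<epsilon>" "tnorm (opsub s' S0) \<le> ennreal \<epsilon>"
    using A(2) by blast
  have z: "tnorm (opsub S0 s) = 0" by (rule gen_unique[OF tqds A(1) g])
  have tc: "trace_class s'" "trace_class S0" "trace_class s" using q(2) A(1) g by (auto simp: gen_def)
  have "tnorm (opsub s' s) \<le> tnorm (opsub s' S0) + tnorm (opsub S0 s)"
    using tc by (intro tnorm_sub_triangle) (auto simp: tc_ml2)
  also have "\<dots> \<le> ennreal \<epsilon>" using q(4) z by simp
  finally show ?thesis using q by blast
qed

lemma core_gen: "is_core_gen T (lspan2 Eb)"
  unfolding is_core_gen_def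
proof (intro conjI)
  show sub: "lspan2 Eb \<subseteq> gen_dom T" using gen_lspan2 unfolding gen_dom_def by blast
  show "graph_closure T (lspan2 Eb) = gen_dom T"
  proof
    show "graph_closure T (lspan2 Eb) \<subseteq> gen_dom T" unfolding graph_closure_def gen_dom_def by blast
  next
    show "gen_dom T \<subseteq> graph_closure T (lspan2 Eb)"
    proof
      fix \<rho> assume "\<rho> \<in> gen_dom T"
      hence "\<rho> \<in> graph_closure T (D0 DM)" using gsf_dom by simp
      then obtain \<sigma> r s where gs: "gen T \<rho> \<sigma>" and rs: "\<And>n. r n \<in> D0 DM \<and> gen T (r n) (s n)"
        and lr: "(\<lambda>n. tnorm (opsub (r n) \<rho>)) \<longlonglongrightarrow> 0" and ls: "(\<lambda>n. tnorm (opsub (s n) \<sigma>)) \<longlonglongrightarrow> 0"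
        unfolding graph_closure_def by blast
      have ex: "\<forall>n. \<exists>q s'. q \<in> lspan2 Eb \<and> gen T q s' \<and> tnorm (opsub q (r n)) \<le> ennreal (rr n) \<and> tnorm (opsub s' (s n)) \<le> ennreal (rr n)"
        using approx_gen rs by (simp add: rr_def)
      then obtain qq ss where qs: "\<And>n. qq n \<in> lspan2 Eb \<and> gen T (qq n) (ss n) \<and> tnorm (opsub (qq n) (r n)) \<le> ennreal (rr n) \<and> tnorm (opsub (ss n) (s n)) \<le> ennreal (rr n)"
        by metis
      have rr0: "(\<lambda>n. ennreal (rr n)) \<longlonglongrightarrow> 0"
      proof -
        have "rr \<longlonglongrightarrow> 0" unfolding rr_def[abs_def] by (rule LIMSEQ_inverse_real_of_nat)
        hence "(\<lambda>n. ennreal (rr n)) \<longlonglongrightarrow> ennreal 0" by (rule tendsto_ennrealI)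
        thus ?thesis by simp
      qed
      have tcr: "trace_class \<rho>" "trace_class \<sigma>" using gs by (auto simp: gen_def)
      have tcn: "trace_class (qq n)" "trace_class (ss n)" "trace_class (r n)" "trace_class (s n)" for n
        using qs[of n] rs[of n] by (auto simp: gen_def)
      have l1: "(\<lambda>n. tnorm (opsub (qq n) \<rho>)) \<longlonglongrightarrow> 0"
      proof (rule ennreal_squeeze)
        show "\<forall>\<^sub>F n in sequentially. tnorm (opsub (qq n) \<rho>) \<le> ennreal (rr n) + tnorm (opsub (r n) \<rho>)"
        proof (rule always_eventually, rule allI)
          fix n
          have "tnorm (opsub (qq n) \<rho>) \<le> tnorm (opsub (qq n) (r n)) + tnorm (opsub (r n) \<rho>)"
            using tcr tcn by (intro tnorm_sub_triangle) (auto simp: tc_ml2)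
          thus "tnorm (opsub (qq n) \<rho>) \<le> ennreal (rr n) + tnorm (opsub (r n) \<rho>)"
            using qs[of n] by (meson add_right_mono order_trans)
        qed
        show "(\<lambda>n. ennreal (rr n) + tnorm (opsub (r n) \<rho>)) \<longlonglongrightarrow> 0"
          using tendsto_add[OF rr0 lr] by simp
      qed
      have l2: "(\<lambda>n. tnorm (opsub (ss n) \<sigma>)) \<longlonglongrightarrow> 0"
      proof (rule ennreal_squeeze)
        show "\<forall>\<^sub>F n in sequentially. tnorm (opsub (ss n) \<sigma>) \<le> ennreal (rr n) + tnorm (opsub (s n) \<sigma>)"
        proof (rule always_eventually, rule allI)
          fix n
          have "tnorm (opsub (ss n) \<sigma>) \<le> tnorm (opsub (ss n) (s n)) + tnorm (opsub (s n) \<sigma>)"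
            using tcr tcn by (intro tnorm_sub_triangle) (auto simp: tc_ml2)
          thus "tnorm (opsub (ss n) \<sigma>) \<le> ennreal (rr n) + tnorm (opsub (s n) \<sigma>)"
            using qs[of n] by (meson add_right_mono order_trans)
        qed
        show "(\<lambda>n. ennreal (rr n) + tnorm (opsub (s n) \<sigma>)) \<longlonglongrightarrow> 0"
          using tendsto_add[OF rr0 ls] by simp
      qed
      show "\<rho> \<in> graph_closure T (lspan2 Eb)"
        unfolding graph_closure_def using gs qs l1 l2 by blast
    qed
  qed
qed

end


theorem proposition3p9:
  fixes T :: "real \<Rightarrow> ('i::countable) op \<Rightarrow> 'i op"
    and DM :: "'i vec set" and M :: "'i op" and L :: "nat \<Rightarrow> 'i op"
  assumes "tp_qds T"
    and "gen_standard_form T DM M L"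
  shows "\<exists>E. orthonormal_basis E \<and> is_core_op DM M (lspan E) \<and> is_core_gen T (lspan2 E)"
proof -
  interpret gsf_qds T DM M L by unfold_locales (rule assms(2), rule assms(1))
  show ?thesis using Eb_onb Eb_core core_gen by blast
qed

end
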